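(* Let $3\le q\le n$ be an integer, $\Lambda\subseteq\mathbb{Z}/q\mathbb{Z}$ non-empty, $t\ge1$, $\varepsilon\in[0,1]$, let $g\colon\{0,1\}^m\to\{0,1\}^n$ be $d$-local and $\mathcal{P}_g=g(\mathcal{U}^m)$. Suppose there are $r'\ge1$ non-connected neighborhoods $N_g(i_1),\dots,N_g(i_{r'})$ each of size $s_a=|N_g(i_a)|\le t$, each of which is Type-2, i.e., $\mathcal{P}_g|_{N_g(i_a)}$ has total variation distance at most $\varepsilon$ from the uniform distribution $\mathcal{U}^{s_a}$. If $\varepsilon\le2^{-14t+10}$, then $$\mathcal{P}_g(\mathrm{supp}\,\mathcal{D}_{q,\Lambda})\le 2q\exp\left\{-\frac{r'\cdot2^{-14t+11}}{q^2}\right\}+\begin{cases}|\Lambda|/q & q\text{ odd},\\ 2\max\{|\Lambda_{\mathsf{even}}|,|\Lambda_{\mathsf{odd}}|\}/q & q\text{ even}.\end{cases}$$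
   Context: $\mathcal{U}^s$ is uniform on $\{0,1\}^s$. $\mathcal{D}_{q,\Lambda}$ is uniform over $x\in\{0,1\}^n$ with $|x|\bmod q\in\Lambda$ ($|x|$ the Hamming weight), so $\mathcal{P}_g(\mathrm{supp}\,\mathcal{D}_{q,\Lambda})=\Pr_{z}[|g(z)|\bmod q\in\Lambda]$. For even $q$, $\Lambda_{\mathsf{even}},\Lambda_{\mathsf{odd}}$ are the even, resp. odd, elements of $\Lambda$. A function $g$ is $d$-local if each output bit depends on at most $d$ input bits; $I_g(i)$ is the set of input coordinates on which output $i$ depends; $N_g(i)=\{j: I_g(j)\cap I_g(i)\neq\emptyset\}$. Neighborhoods are non-connected if the sets $\bigcup_{j\in N_g(i_a)}I_g(j)$ are pairwise disjoint. *)

theory Defs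
  imports Complex_Main "HOL-Library.FuncSet"
begin

text \<open>Bit strings in {0,1}^m are functions nat => bool, extensional on {..<m}.\<close>
definition cube :: "nat \<Rightarrow> (nat \<Rightarrow> bool) set" where
  "cube m = ({..<m} \<rightarrow>\<^sub>E (UNIV :: bool set))"

definition unif_prob :: "nat \<Rightarrow> ((nat \<Rightarrow> bool) \<Rightarrow> bool) \<Rightarrow> real" where
  "unif_prob m P = real (card {z \<in> cube m. P z}) / 2 ^ m"

definition hweight :: "nat \<Rightarrow> (nat \<Rightarrow> bool) \<Rightarrow> nat" where
  "hweight n x = card {i \<in> {..<n}. x i}"

definition dep_set :: "nat \<Rightarrow> ((nat \<Rightarrow> bool) \<Rightarrow> (nat \<Rightarrow> bool)) \<Rightarrow> nat \<Rightarrow> nat set" where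
  "dep_set m g i = {j \<in> {..<m}. \<exists>x \<in> cube m. g x i \<noteq> g (x(j := \<not> x j)) i}"

definition local_fun :: "nat \<Rightarrow> nat \<Rightarrow> nat \<Rightarrow> ((nat \<Rightarrow> bool) \<Rightarrow> (nat \<Rightarrow> bool)) \<Rightarrow> bool" where
  "local_fun d m n g \<longleftrightarrow> (\<forall>i<n. card (dep_set m g i) \<le> d)"

text \<open>N_g(i) = {j : I_g(j) \<inter> I_g(i) \<noteq> {}}; the output i itself is always
  regarded as a member of its own neighbourhood.\<close>
definition nbhd :: "nat \<Rightarrow> nat \<Rightarrow> ((nat \<Rightarrow> bool) \<Rightarrow> (nat \<Rightarrow> bool)) \<Rightarrow> nat \<Rightarrow> nat set" where
  "nbhd m n g i = insert i {j \<in> {..<n}. dep_set m g j \<inter> dep_set m g i \<noteq> {}}"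

definition tv_marginal_unif :: "nat \<Rightarrow> ((nat \<Rightarrow> bool) \<Rightarrow> (nat \<Rightarrow> bool)) \<Rightarrow> nat set \<Rightarrow> real" where
  "tv_marginal_unif m g S =
     (1/2) * (\<Sum>y \<in> S \<rightarrow>\<^sub>E (UNIV :: bool set).
        \<bar>unif_prob m (\<lambda>z. restrict (g z) S = y) - 1 / 2 ^ card S\<bar>)"

end

theory Submission
  imports Defs
begin


lemma finite_cube[simp]: "finite (cube m)"
  unfolding cube_def by (intro finite_PiE) auto

lemma card_cube: "card (cube m) = 2 ^ m"
  unfolding cube_def by (simp add: card_PiE)

lemma cube_nonempty: "cube m \<noteq> {}"
  using card_cube[of m] by auto

lemma cube_out: "z \<in> cube m \<Longrightarrow> j \<ge> m \<Longrightarrow> z j = undefined"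
  unfolding cube_def by (auto simp: PiE_def extensional_def)

lemma cube_upd: "z \<in> cube m \<Longrightarrow> j < m \<Longrightarrow> z(j := b) \<in> cube m"
  unfolding cube_def by (auto simp: PiE_def extensional_def)

definition mrg :: "nat set \<Rightarrow> (nat \<Rightarrow> bool) \<Rightarrow> (nat \<Rightarrow> bool) \<Rightarrow> (nat \<Rightarrow> bool)" where
  "mrg A z x = (\<lambda>j. if j \<in> A then x j else z j)"

lemma mrg_in_cube:
  assumes "A \<subseteq> {..<m}" "z \<in> cube m" "x \<in> A \<rightarrow>\<^sub>E (UNIV::bool set)"
  shows "mrg A z x \<in> cube m"
  using assms unfolding cube_def mrg_def by (auto simp: PiE_def extensional_def)

lemma finite_PiE_bool[simp]: "finite A \<Longrightarrow> finite (A \<rightarrow>\<^sub>E (UNIV::bool set))"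
  by (intro finite_PiE) auto

lemma card_PiE_bool: "finite A \<Longrightarrow> card (A \<rightarrow>\<^sub>E (UNIV::bool set)) = 2 ^ card A"
  by (simp add: card_PiE)

lemma resample_sum:
  fixes F :: "(nat \<Rightarrow> bool) \<Rightarrow> 'a::comm_ring_1"
  assumes A: "A \<subseteq> {..<m}"
  shows "(\<Sum>z\<in>cube m. \<Sum>x\<in>A \<rightarrow>\<^sub>E (UNIV::bool set). F (mrg A z x))
         = of_nat (2 ^ card A) * (\<Sum>z\<in>cube m. F z)"
proof -
  have fA: "finite A" using A finite_subset by blast
  let ?P = "A \<rightarrow>\<^sub>E (UNIV::bool set)"
  have "(\<Sum>z\<in>cube m. \<Sum>x\<in>?P. F (mrg A z x)) = (\<Sum>(z,x)\<in>cube m \<times> ?P. F (mrg A z x))"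
    by (rule sum.cartesian_product)
  also have "\<dots> = (\<Sum>(w,u)\<in>cube m \<times> ?P. F w)"
  proof (rule sum.reindex_bij_witness[where i = "\<lambda>(w,u). (mrg A w u, restrict w A)"
                                       and j = "\<lambda>(z,x). (mrg A z x, restrict z A)"])
    fix a assume a: "a \<in> cube m \<times> ?P"
    obtain z x where zx: "a = (z,x)" by force
    have "mrg A (mrg A z x) (restrict z A) = z" by (auto simp: mrg_def)
    moreover have "restrict (mrg A z x) A = x" using a zx
      by (auto simp: mrg_def PiE_def extensional_def restrict_def fun_eq_iff)
    ultimately show "(\<lambda>(w,u). (mrg A w u, restrict w A)) ((\<lambda>(z,x). (mrg A z x, restrict z A)) a) = a"
      using zx by simp
    show "(\<lambda>(z,x). (mrg A z x, restrict z A)) a \<in> cube m \<times> ?P"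
      using a zx mrg_in_cube[OF A] by auto
    show "(case (\<lambda>(z,x). (mrg A z x, restrict z A)) a of (w,u) \<Rightarrow> F w) = (case a of (z,x) \<Rightarrow> F (mrg A z x))"
      using zx by simp
  next
    fix b assume b: "b \<in> cube m \<times> ?P"
    obtain z x where zx: "b = (z,x)" by force
    have "mrg A (mrg A z x) (restrict z A) = z" by (auto simp: mrg_def)
    moreover have "restrict (mrg A z x) A = x" using b zx
      by (auto simp: mrg_def PiE_def extensional_def restrict_def fun_eq_iff)
    ultimately show "(\<lambda>(z,x). (mrg A z x, restrict z A)) ((\<lambda>(w,u). (mrg A w u, restrict w A)) b) = b"
      using zx by simp
    show "(\<lambda>(w,u). (mrg A w u, restrict w A)) b \<in> cube m \<times> ?P"
      using b zx mrg_in_cube[OF A] by auto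
  qed
  also have "\<dots> = (\<Sum>w\<in>cube m. \<Sum>u\<in>?P. F w)"
    by (rule sum.cartesian_product[symmetric])
  also have "\<dots> = (\<Sum>w\<in>cube m. of_nat (2 ^ card A) * F w)"
    using card_PiE_bool[OF fA] by simp
  finally show ?thesis by (simp add: sum_distrib_left)
qed

definition Avg :: "nat \<Rightarrow> ((nat \<Rightarrow> bool) \<Rightarrow> 'a::real_normed_field) \<Rightarrow> 'a" where
  "Avg m F = (\<Sum>z\<in>cube m. F z) / 2 ^ m"

definition Rs :: "nat set \<Rightarrow> ((nat \<Rightarrow> bool) \<Rightarrow> 'a::real_normed_field) \<Rightarrow> (nat \<Rightarrow> bool) \<Rightarrow> 'a" where
  "Rs A F z = (\<Sum>x\<in>A \<rightarrow>\<^sub>E (UNIV::bool set). F (mrg A z x)) / 2 ^ card A"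

lemma Avg_cong: "(\<And>z. z \<in> cube m \<Longrightarrow> F z = G z) \<Longrightarrow> Avg m F = Avg m G"
  unfolding Avg_def by (metis sum.cong)

lemma Avg_const: "Avg m (\<lambda>_. c) = c"
  unfolding Avg_def by (simp add: card_cube)

lemma Avg_Rs: assumes "A \<subseteq> {..<m}" shows "Avg m (Rs A F) = Avg m F"
proof -
  have "(\<Sum>z\<in>cube m. Rs A F z) = (\<Sum>z\<in>cube m. \<Sum>x\<in>A \<rightarrow>\<^sub>E (UNIV::bool set). F (mrg A z x)) / 2 ^ card A"
    unfolding Rs_def by (simp add: sum_divide_distrib)
  also have "\<dots> = (\<Sum>z\<in>cube m. F z)"
    using resample_sum[OF assms, of F] by simp
  finally show ?thesis unfolding Avg_def by simp
qed

lemma Avg_add: "Avg m (\<lambda>z. F z + G z) = Avg m F + Avg m G"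
  unfolding Avg_def by (simp add: sum.distrib add_divide_distrib)
lemma Avg_diff: "Avg m (\<lambda>z. F z - G z) = Avg m F - Avg m G"
  unfolding Avg_def by (simp add: sum_subtractf diff_divide_distrib)
lemma Avg_cmult: "Avg m (\<lambda>z. c * F z) = c * Avg m F"
  unfolding Avg_def by (simp add: sum_distrib_left)
lemma Avg_multc: "Avg m (\<lambda>z. F z * c) = Avg m F * c"
  unfolding Avg_def by (simp add: sum_distrib_right)

lemma norm_Avg: "norm (Avg m F) \<le> Avg m (\<lambda>z. norm (F z))"
proof -
  have "norm (Avg m F) = norm (\<Sum>z\<in>cube m. F z) / 2 ^ m"
    unfolding Avg_def by (simp add: norm_divide norm_power)
  also have "\<dots> \<le> (\<Sum>z\<in>cube m. norm (F z)) / 2 ^ m"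
    by (intro divide_right_mono norm_sum) auto
  finally show ?thesis unfolding Avg_def by simp
qed

lemma Avg_mono: "(\<And>z. z \<in> cube m \<Longrightarrow> F z \<le> G z) \<Longrightarrow> Avg m F \<le> (Avg m G::real)"
  unfolding Avg_def by (intro divide_right_mono sum_mono) auto

definition dep_on :: "nat \<Rightarrow> nat set \<Rightarrow> ((nat \<Rightarrow> bool) \<Rightarrow> 'b) \<Rightarrow> bool" where
  "dep_on m S F \<longleftrightarrow> (\<forall>x\<in>cube m. \<forall>y\<in>cube m. (\<forall>j\<in>S. x j = y j) \<longrightarrow> F x = F y)"

lemma dep_onD: "dep_on m S F \<Longrightarrow> x \<in> cube m \<Longrightarrow> y \<in> cube m \<Longrightarrow> (\<And>j. j \<in> S \<Longrightarrow> x j = y j) \<Longrightarrow> F x = F y"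
  unfolding dep_on_def by blast

lemma dep_onI: "(\<And>x y. x \<in> cube m \<Longrightarrow> y \<in> cube m \<Longrightarrow> (\<And>j. j \<in> S \<Longrightarrow> x j = y j) \<Longrightarrow> F x = F y) \<Longrightarrow> dep_on m S F"
  unfolding dep_on_def by blast

lemma dep_on_mono: "dep_on m S F \<Longrightarrow> S \<subseteq> S' \<Longrightarrow> dep_on m S' F"
  by (rule dep_onI, erule dep_onD) auto

lemma dep_on_mult: "dep_on m S F \<Longrightarrow> dep_on m T G \<Longrightarrow> dep_on m (S \<union> T) (\<lambda>z. F z * G z)"
proof (rule dep_onI)
  fix x y assume a: "dep_on m S F" "dep_on m T G" "x \<in> cube m" "y \<in> cube m" "\<And>j. j \<in> S \<union> T \<Longrightarrow> x j = y j"
  have "F x = F y" by (rule dep_onD[OF a(1,3,4)]) (simp add: a(5))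
  moreover have "G x = G y" by (rule dep_onD[OF a(2,3,4)]) (simp add: a(5))
  ultimately show "F x * G x = F y * G y" by simp
qed

lemma dep_on_comp: "dep_on m S F \<Longrightarrow> dep_on m S (\<lambda>z. h (F z))"
proof (rule dep_onI)
  fix x y assume a: "dep_on m S F" "x \<in> cube m" "y \<in> cube m" "\<And>j. j \<in> S \<Longrightarrow> x j = y j"
  from a have "F x = F y" by (rule dep_onD)
  then show "h (F x) = h (F y)" by simp
qed

lemma dep_on_prod:
  fixes r :: nat
  shows "(\<And>a. a < r \<Longrightarrow> dep_on m (S a) (F a)) \<Longrightarrow> dep_on m (\<Union>a<r. S a) (\<lambda>z. \<Prod>a<r. F a z)"
proof (induction r)
  case 0 then show ?case by (simp add: dep_on_def)
next
  case (Suc r)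
  have "dep_on m ((\<Union>a<r. S a) \<union> S r) (\<lambda>z. (\<Prod>a<r. F a z) * F r z)"
    using Suc by (intro dep_on_mult) auto
  moreover have "(\<Union>a<Suc r. S a) = (\<Union>a<r. S a) \<union> S r" by (auto simp: lessThan_Suc)
  ultimately show ?case by simp
qed

lemma Rs_mult_left:
  assumes "dep_on m S G" "S \<inter> A = {}" "A \<subseteq> {..<m}" "z \<in> cube m"
  shows "Rs A (\<lambda>w. G w * H w) z = G z * Rs A H z"
proof -
  have "G (mrg A z x) = G z" if "x \<in> A \<rightarrow>\<^sub>E (UNIV::bool set)" for x
  proof -
    have "\<And>j. j\<in>S \<Longrightarrow> mrg A z x j = z j" using assms(2) unfolding mrg_def by auto
    then show ?thesis by (rule dep_onD[OF assms(1) mrg_in_cube[OF assms(3,4) that] assms(4)])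
  qed
  then show ?thesis unfolding Rs_def
    by (simp add: sum_distrib_left)
qed

lemma Rs_dep:
  assumes "dep_on m S H" "A \<subseteq> {..<m}"
  shows "dep_on m (S - A) (Rs A H)"
  unfolding dep_on_def
proof (intro ballI impI)
  fix z z' assume z: "z \<in> cube m" and z': "z' \<in> cube m" and ag: "\<forall>j\<in>S - A. z j = z' j"
  have "H (mrg A z x) = H (mrg A z' x)" if "x \<in> A \<rightarrow>\<^sub>E (UNIV::bool set)" for x
  proof -
    have "\<And>j. j\<in>S \<Longrightarrow> mrg A z x j = mrg A z' x j" using ag unfolding mrg_def by auto
    then show ?thesis by (rule dep_onD[OF assms(1) mrg_in_cube[OF assms(2) z that] mrg_in_cube[OF assms(2) z' that]])
  qed
  then have "(\<Sum>x\<in>A \<rightarrow>\<^sub>E (UNIV::bool set). H (mrg A z x)) = (\<Sum>x\<in>A \<rightarrow>\<^sub>E (UNIV::bool set). H (mrg A z' x))"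
    by (rule sum.cong[OF refl])
  then show "Rs A H z = Rs A H z'" unfolding Rs_def by simp
qed

lemma dep_on_empty_const: "dep_on m {} F \<Longrightarrow> z \<in> cube m \<Longrightarrow> z' \<in> cube m \<Longrightarrow> F z = F z'"
  by (erule dep_onD) auto

lemma indep2:
  fixes F G :: "(nat \<Rightarrow> bool) \<Rightarrow> 'a::real_normed_field"
  assumes F: "dep_on m S F" and G: "dep_on m T G" and ST: "S \<inter> T = {}" and S: "S \<subseteq> {..<m}"
  shows "Avg m (\<lambda>z. F z * G z) = Avg m F * Avg m G"
proof -
  obtain z0 where z0: "z0 \<in> cube m" using cube_nonempty by blast
  define c where "c = Rs S F z0"
  have dF: "dep_on m {} (Rs S F)" using Rs_dep[OF F S] by simp
  have cst: "Rs S F z = c" if "z \<in> cube m" for z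
    unfolding c_def by (rule dep_on_empty_const[OF dF that z0])
  have TS: "T \<inter> S = {}" using ST by blast
  have "Avg m (\<lambda>z. F z * G z) = Avg m (Rs S (\<lambda>z. G z * F z))"
    using Avg_Rs[OF S, of "\<lambda>z. G z * F z"] by (simp add: mult.commute)
  also have "\<dots> = Avg m (\<lambda>z. G z * c)"
  proof (rule Avg_cong)
    fix z assume z: "z \<in> cube m"
    show "Rs S (\<lambda>z. G z * F z) z = G z * c"
      using Rs_mult_left[OF G TS S z] cst[OF z] by simp
  qed
  also have "\<dots> = Avg m G * c" by (rule Avg_multc)
  also have "Avg m F = c"
  proof -
    have "Avg m F = Avg m (Rs S F)" using Avg_Rs[OF S, of F] by simp
    also have "\<dots> = Avg m (\<lambda>_. c)" using cst by (rule Avg_cong)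
    finally show ?thesis by (simp add: Avg_const)
  qed
  ultimately show ?thesis by (simp add: mult.commute)
qed

lemma indep_prod:
  fixes F :: "nat \<Rightarrow> (nat \<Rightarrow> bool) \<Rightarrow> 'a::real_normed_field" and r :: nat
  assumes "\<And>a. a < r \<Longrightarrow> dep_on m (S a) (F a)"
    and "\<And>a. a < r \<Longrightarrow> S a \<subseteq> {..<m}"
    and "\<And>a b. a < r \<Longrightarrow> b < r \<Longrightarrow> a \<noteq> b \<Longrightarrow> S a \<inter> S b = {}"
  shows "Avg m (\<lambda>z. \<Prod>a<r. F a z) = (\<Prod>a<r. Avg m (F a))"
  using assms
proof (induction r)
  case 0 then show ?case by (simp add: Avg_const)
next
  case (Suc r)
  have disj: "S r \<inter> (\<Union>a<r. S a) = {}"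
  proof -
    { fix x a assume "x \<in> S r" "x \<in> S a" "a < r"
      then have False using Suc.prems(3)[of r a] by auto }
    then show ?thesis by blast
  qed
  have d1: "dep_on m (S r) (F r)" using Suc.prems(1) by simp
  have d2: "dep_on m (\<Union>a<r. S a) (\<lambda>z. \<Prod>a<r. F a z)"
    by (rule dep_on_prod) (simp add: Suc.prems(1))
  have s1: "S r \<subseteq> {..<m}" using Suc.prems(2) by simp
  have "Avg m (\<lambda>z. \<Prod>a<Suc r. F a z) = Avg m (\<lambda>z. F r z * (\<Prod>a<r. F a z))"
    by (simp add: mult.commute)
  also have "\<dots> = Avg m (F r) * Avg m (\<lambda>z. \<Prod>a<r. F a z)"
    by (rule indep2[OF d1 d2 disj s1])
  also have "Avg m (\<lambda>z. \<Prod>a<r. F a z) = (\<Prod>a<r. Avg m (F a))"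
    by (rule Suc.IH) (simp_all add: Suc.prems)
  finally show ?case by (simp add: mult.commute)
qed

lemma loc:
  assumes "x \<in> cube m" "y \<in> cube m" "\<forall>j\<in>dep_set m g i. x j = y j"
  shows "g x i = g y i"
proof -
  have "\<forall>x. x \<in> cube m \<longrightarrow> card {j\<in>{..<m}. x j \<noteq> y j} = c \<longrightarrow> (\<forall>j\<in>dep_set m g i. x j = y j) \<longrightarrow> g x i = g y i" for c
  proof (induction c)
    case 0
    { fix x assume x: "x \<in> cube m" "card {j\<in>{..<m}. x j \<noteq> y j} = 0"
      then have "{j\<in>{..<m}. x j \<noteq> y j} = {}" by simp
      then have "\<forall>j<m. x j = y j" by blast
      moreover have "\<forall>j. m \<le> j \<longrightarrow> x j = y j" using x(1) assms(2) by (simp add: cube_out)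
      ultimately have "x = y" by (intro ext) (meson not_le)
      then have "g x i = g y i" by simp }
    then show ?case by blast
  next
    case (Suc c)
    { fix x assume x: "x \<in> cube m" and cx: "card {j\<in>{..<m}. x j \<noteq> y j} = Suc c"
        and ag: "\<forall>j\<in>dep_set m g i. x j = y j"
      have "card {j\<in>{..<m}. x j \<noteq> y j} > 0" using cx by simp
      then have "{j\<in>{..<m}. x j \<noteq> y j} \<noteq> {}" using card_gt_0_iff by blast
      then obtain j where j: "j \<in> {j\<in>{..<m}. x j \<noteq> y j}" by blast
      have jnd: "j \<notin> dep_set m g i" using ag j by auto
      define x1 where "x1 = x(j := \<not> x j)"
      have x1c: "x1 \<in> cube m" unfolding x1_def using cube_upd x j by auto
      have "j < m" using j by simp
      then have "\<not> (\<exists>x\<in>cube m. g x i \<noteq> g (x(j := \<not> x j)) i)" using jnd unfolding dep_set_def by simp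
      then have "g x i = g x1 i" using x unfolding x1_def by blast
      moreover have "{j'\<in>{..<m}. x1 j' \<noteq> y j'} = {j\<in>{..<m}. x j \<noteq> y j} - {j}"
        using j unfolding x1_def by auto
      then have "card {j'\<in>{..<m}. x1 j' \<noteq> y j'} = c" using cx j by simp
      moreover have "\<forall>j'\<in>dep_set m g i. x1 j' = y j'" using ag jnd unfolding x1_def by auto
      ultimately have "g x i = g y i" using Suc.IH x1c by simp }
    then show ?case by blast
  qed
  then show ?thesis using assms by blast
qed



lemma cos_periodic_int: "cos (x + 2 * pi * of_int n) = cos x"
proof -
  have c1: "cis (2 * pi * of_int n) = 1" by (rule cis_multiple_2pi) simp
  have "cis (x + 2 * pi * of_int n) = cis x * cis (2 * pi * of_int n)" by (rule cis_mult[symmetric])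
  also have "\<dots> = cis x" using c1 by simp
  finally have e: "cis (x + 2 * pi * of_int n) = cis x" .
  from arg_cong[OF e, of Re] show ?thesis by simp
qed

lemma sin_taylor3: fixes y :: real assumes "0 \<le> y" shows "y - y^3/6 \<le> sin y"
proof -
  have "\<bar>sin y - (\<Sum>m<3. sin_coeff m * y ^ m)\<bar> \<le> inverse (fact 3) * \<bar>y\<bar> ^ 3"
    by (rule Maclaurin_sin_bound)
  moreover have "(\<Sum>m<3. sin_coeff m * y ^ m) = y" by (simp add: sin_coeff_def numeral_3_eq_3)
  moreover have "inverse (fact 3) * \<bar>y\<bar> ^ 3 = y^3 / 6" using assms by (simp add: fact_numeral)
  ultimately show ?thesis by linarith
qed

lemma sin_pi_frac_lower:
  fixes q r :: nat
  assumes "1 \<le> r" "2 * r \<le> q"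
  shows "1 / real q \<le> sin (pi * r / q)"
proof -
  have q0: "real q \<ge> 2" using assms by simp
  define y where "y = pi * r / q"
  have y0: "0 \<le> y" using q0 unfolding y_def by simp
  have "y \<le> pi / 2" using assms q0 unfolding y_def by (simp add: field_simps)
  then have y2: "y \<le> 2" using pi_half_less_two by linarith
  have yl: "2 / real q \<le> y"
  proof -
    have r1: "1 \<le> real r" using assms by simp
    have "pi * 1 \<le> pi * r" by (rule mult_left_mono[OF r1]) simp
    then have "2 \<le> pi * r" using pi_ge_two by linarith
    then show ?thesis using q0 unfolding y_def by (simp add: field_simps)
  qed
  have st: "y - y^3/6 \<le> sin y" by (rule sin_taylor3[OF y0])
  show ?thesis
  proof (cases "y \<le> 3/2")
    case True
    have "y^3/6 \<le> 3 * y / 8"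
    proof -
      have "y * y \<le> 3/2 * (3/2)" by (rule mult_mono[OF True True _ y0]) simp
      then have "y * (y * y) \<le> y * (9/4)" using y0 by (intro mult_left_mono) auto
      then show ?thesis by (simp add: power3_eq_cube)
    qed
    then have "5 * y / 8 \<le> sin y" using st by linarith
    moreover have "1 / real q \<le> 5 * y / 8" using yl q0 by (simp add: field_simps)
    ultimately show ?thesis unfolding y_def by linarith
  next
    case False
    have "y * y \<le> 2 * 2" by (rule mult_mono[OF y2 y2 _ y0]) simp
    then have "y * (y * y) \<le> y * 4" using y0 by (intro mult_left_mono) auto
    moreover have "y^3 = y * (y * y)" by (simp add: power3_eq_cube)
    ultimately have "1/2 \<le> y - y^3/6" using False by linarith
    moreover have "1 / real q \<le> 1/2" using q0 by simp
    ultimately show ?thesis using st unfolding y_def by linarith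
  qed
qed

lemma cos_bound:
  fixes q :: nat and j :: int
  assumes q: "q \<ge> 2" and nd: "\<not> int q dvd j"
  shows "cos (2 * pi * j / q) \<le> 1 - 2 / (real q)^2"
proof -
  define r where "r = j mod int q"
  define d where "d = j div int q"
  have jr: "j = int q * d + r" unfolding r_def d_def by simp
  have r0: "0 < r" using nd unfolding r_def
    by (metis dvd_eq_mod_eq_0 le_less pos_mod_sign of_nat_0_less_iff q zero_less_numeral less_le_trans)
  have rq: "r < int q" unfolding r_def using q by simp
  define rn where "rn = nat r"
  have rn: "r = int rn" "1 \<le> rn" "rn < q" using r0 rq unfolding rn_def by auto
  have q0: "real q > 0" using q by simp
  have "2 * pi * j / q = 2 * pi * rn / q + 2 * pi * of_int d"
    using q0 by (simp add: jr rn field_simps)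
  then have "cos (2 * pi * j / q) = cos (2 * pi * rn / q)" by (simp add: cos_periodic_int)
  also have "\<dots> = 1 - 2 * (sin (pi * rn / q))^2"
    using cos_double_sin[of "pi * rn / q"] by (simp add: mult.assoc)
  finally have c1: "cos (2 * pi * j / q) = 1 - 2 * (sin (pi * rn / q))^2" .
  have "1 / real q \<le> sin (pi * rn / q)"
  proof (cases "2 * rn \<le> q")
    case True then show ?thesis using sin_pi_frac_lower rn by blast
  next
    case False
    have "1 / real q \<le> sin (pi * (q - rn) / q)"
      using sin_pi_frac_lower[of "q - rn" q] False rn by simp
    also have "pi * (q - rn) / q = pi - pi * rn / q" using q0 rn by (simp add: field_simps of_nat_diff)
    finally show ?thesis by (simp add: sin_pi_minus)
  qed
  then have "(1 / real q)^2 \<le> (sin (pi * rn / q))^2"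
    by (rule power_mono) (use q0 in simp)
  then have "1 / (real q)^2 \<le> (sin (pi * rn / q))^2" by (simp add: power_divide)
  then show ?thesis using c1 by simp
qed

lemma card_filter_sum:
  fixes P :: "'x \<times> 'x \<Rightarrow> bool"
  assumes "finite X"
  shows "real (card {p \<in> X \<times> X. P p}) = (\<Sum>x\<in>X. \<Sum>y\<in>X. if P (x,y) then 1 else 0)"
proof -
  have "real (card {p \<in> X \<times> X. P p}) = (\<Sum>p\<in>{p \<in> X \<times> X. P p}. 1)" by simp
  also have "\<dots> = (\<Sum>p\<in>X \<times> X. if P p then 1 else 0)"
    using assms by (intro sum.inter_filter) simp
  also have "\<dots> = (\<Sum>x\<in>X. \<Sum>y\<in>X. if P (x,y) then 1 else 0)"
    by (rule sum.cartesian_product')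
  finally show ?thesis .
qed



lemma fiber_norm:
  fixes X :: "'x set" and w :: "'x \<Rightarrow> nat" and q k :: nat
  assumes fin: "finite X" and ne: "X \<noteq> {}" and q: "q \<ge> 2"
  shows "cmod ((\<Sum>x\<in>X. cis (2*pi*k*w x/q)) / of_nat (card X))
     \<le> 1 - real (card {p \<in> X \<times> X. \<not> int q dvd int k * (int (w (fst p)) - int (w (snd p)))})
            / (real (card X))^2 / (real q)^2"
proof -
  define N where "N = real (card X)"
  have N0: "N > 0" using fin ne unfolding N_def by (simp add: card_gt_0_iff)
  define a where "a x = cis (2*pi*k*w x/q)" for x
  define bad where "bad x y = (\<not> int q dvd int k * (int (w x) - int (w y)))" for x y
  define c where "c = (\<Sum>x\<in>X. a x) / of_nat (card X)"
  have "complex_of_real ((cmod c)^2) = c * cnj c" by (rule complex_norm_square)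
  also have "\<dots> = (\<Sum>x\<in>X. \<Sum>y\<in>X. a x * cnj (a y)) / (of_real N)^2"
    unfolding c_def N_def by (simp add: sum_product power2_eq_square)
  finally have "(cmod c)^2 = Re ((\<Sum>x\<in>X. \<Sum>y\<in>X. a x * cnj (a y)) / (of_real N)^2)"
    by (metis Re_complex_of_real)
  also have "\<dots> = (\<Sum>x\<in>X. \<Sum>y\<in>X. Re (a x * cnj (a y))) / N^2"
    by (simp add: Re_divide_of_real flip: of_real_power)
  also have "\<dots> = (\<Sum>x\<in>X. \<Sum>y\<in>X. cos (2 * pi * of_int (int k * (int (w x) - int (w y))) / q)) / N^2"
  proof -
    have "Re (a x * cnj (a y)) = cos (2 * pi * of_int (int k * (int (w x) - int (w y))) / q)" for x y
    proof -
      have "a x * cnj (a y) = cis (2*pi*k*w x/q - 2*pi*k*w y/q)"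
        unfolding a_def by (simp add: cis_cnj cis_mult)
      moreover have "2*pi*k*w x/q - 2*pi*k*w y/q = 2 * pi * of_int (int k * (int (w x) - int (w y))) / q"
        using q by (simp add: field_simps)
      ultimately show ?thesis by simp
    qed
    then show ?thesis by simp
  qed
  also have "\<dots> \<le> (\<Sum>x\<in>X. \<Sum>y\<in>X. 1 - 2 / (real q)^2 * (if bad x y then 1 else 0)) / N^2"
  proof -
    have "cos (2 * pi * of_int (int k * (int (w x) - int (w y))) / q) \<le> 1 - 2 / (real q)^2 * (if bad x y then 1 else 0)" for x y
    proof (cases "bad x y")
      case True
      then show ?thesis using cos_bound[OF q, of "int k * (int (w x) - int (w y))"] unfolding bad_def by simp
    next
      case False then show ?thesis by simp
    qed
    then show ?thesis using N0 by (intro divide_right_mono sum_mono) auto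
  qed
  also have "\<dots> = 1 - 2 / (real q)^2 * real (card {p \<in> X \<times> X. bad (fst p) (snd p)}) / N^2"
  proof -
    have "(\<Sum>x\<in>X. \<Sum>y\<in>X. 1 - 2 / (real q)^2 * (if bad x y then 1 else 0))
        = N^2 - 2 / (real q)^2 * (\<Sum>x\<in>X. \<Sum>y\<in>X. (if bad x y then 1 else 0))"
      unfolding N_def by (simp add: sum_subtractf sum_distrib_left power2_eq_square)
    moreover have "real (card {p \<in> X \<times> X. bad (fst p) (snd p)}) = (\<Sum>x\<in>X. \<Sum>y\<in>X. (if bad x y then 1 else 0))"
      using card_filter_sum[OF fin, of "\<lambda>p. bad (fst p) (snd p)"] by simp
    ultimately show ?thesis using N0 by (simp add: diff_divide_distrib)
  qed
  finally have c2: "(cmod c)^2 \<le> 1 - 2 * (real (card {p \<in> X \<times> X. bad (fst p) (snd p)}) / N^2 / (real q)^2)"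
    by (simp add: field_simps)
  define u where "u = real (card {p \<in> X \<times> X. bad (fst p) (snd p)}) / N^2 / (real q)^2"
  have u0: "u \<ge> 0" unfolding u_def by simp
  have "cmod c \<le> 1 - u"
  proof (rule ccontr)
    assume "\<not> cmod c \<le> 1 - u"
    then have h: "1 - u < cmod c" by simp
    have "(cmod c)^2 \<le> 1 - 2 * u" using c2 unfolding u_def by simp
    moreover have "0 \<le> (cmod c)^2" by simp
    ultimately have "u \<le> 1/2" by linarith
    then have "(1 - u)^2 < (cmod c)^2" using h by (intro power_strict_mono) auto
    moreover have "(1 - u)^2 = 1 - 2 * u + u * u" by (simp add: power2_eq_square algebra_simps)
    moreover have "0 \<le> u * u" using u0 by simp
    ultimately show False using \<open>(cmod c)^2 \<le> 1 - 2 * u\<close> by linarith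
  qed
  then show ?thesis unfolding c_def a_def u_def N_def bad_def by simp
qed

lemma fiber_cov:
  fixes X :: "'x set" and w :: "'x \<Rightarrow> nat" and bb :: "'x \<Rightarrow> bool"
    and T :: "nat \<Rightarrow> 'a::real_normed_field" and q k :: nat
  assumes fin: "finite X" and ne: "X \<noteq> {}"
    and Tn: "\<And>u. norm (T u) \<le> 1"
    and Tc: "\<And>u v. int q dvd int k * (int u - int v) \<Longrightarrow> T u = T v"
  shows "norm ((\<Sum>x\<in>X. T (w x) * (if bb x then 1 else 0)) / of_nat (card X)
            - (\<Sum>x\<in>X. T (w x)) / of_nat (card X) * ((\<Sum>x\<in>X. (if bb x then 1 else 0)) / of_nat (card X)))
     \<le> real (card {p \<in> X \<times> X. \<not> int q dvd int k * (int (w (fst p)) - int (w (snd p)))}) / (real (card X))^2"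
proof -
  define N where "N = (of_nat (card X) :: 'a)"
  have N0: "N \<noteq> 0" using fin ne unfolding N_def by simp
  have nN: "norm N = real (card X)" unfolding N_def by (simp add: norm_of_nat)
  define t where "t x = T (w x)" for x
  define b where "b x = (if bb x then 1 else (0::'a))" for x
  define bad where "bad x y = (\<not> int q dvd int k * (int (w x) - int (w y)))" for x y
  define S where "S = (\<Sum>x\<in>X. \<Sum>y\<in>X. t x * (b x - b y))"
  have eq: "(\<Sum>x\<in>X. t x * b x) / N - (\<Sum>x\<in>X. t x) / N * ((\<Sum>x\<in>X. b x) / N) = S / N^2"
  proof -
    have "(\<Sum>x\<in>X. \<Sum>y\<in>X. t x * b x) = N * (\<Sum>x\<in>X. t x * b x)"
      unfolding N_def by (simp add: sum_distrib_left mult.commute)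
    moreover have "(\<Sum>x\<in>X. \<Sum>y\<in>X. t x * b y) = (\<Sum>x\<in>X. t x) * (\<Sum>x\<in>X. b x)"
      by (simp add: sum_product)
    ultimately have "S = N * (\<Sum>x\<in>X. t x * b x) - (\<Sum>x\<in>X. t x) * (\<Sum>x\<in>X. b x)"
      unfolding S_def by (simp add: right_diff_distrib sum_subtractf)
    then show ?thesis using N0 by (simp add: field_simps power2_eq_square)
  qed
  have S2: "2 * S = (\<Sum>x\<in>X. \<Sum>y\<in>X. (t x - t y) * (b x - b y))"
  proof -
    have sw: "S = (\<Sum>x\<in>X. \<Sum>y\<in>X. t y * (b y - b x))" unfolding S_def by (rule sum.swap)
    have "2 * S = (\<Sum>x\<in>X. \<Sum>y\<in>X. t x * (b x - b y)) + (\<Sum>x\<in>X. \<Sum>y\<in>X. t y * (b y - b x))"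
      by (metis S_def sw mult_2)
    also have "\<dots> = (\<Sum>x\<in>X. \<Sum>y\<in>X. t x * (b x - b y) + t y * (b y - b x))"
      by (simp only: sum.distrib)
    also have "\<dots> = (\<Sum>x\<in>X. \<Sum>y\<in>X. (t x - t y) * (b x - b y))"
    proof (intro sum.cong refl)
      fix x y show "t x * (b x - b y) + t y * (b y - b x) = (t x - t y) * (b x - b y)"
        by (simp add: algebra_simps)
    qed
    finally show ?thesis .
  qed
  have pt: "norm ((t x - t y) * (b x - b y)) \<le> 2 * (if bad x y then 1 else 0)" for x y
  proof (cases "bad x y")
    case False
    then have "t x = t y" unfolding bad_def t_def using Tc by blast
    then show ?thesis by simp
  next
    case True
    have "norm (t x - t y) \<le> 2" using Tn[of "w x"] Tn[of "w y"] norm_triangle_ineq4[of "t x" "t y"]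
      unfolding t_def by linarith
    moreover have "norm (b x - b y) \<le> 1" unfolding b_def by auto
    ultimately have "norm (t x - t y) * norm (b x - b y) \<le> 2 * 1"
      by (intro mult_mono) auto
    then show ?thesis using True by (simp add: norm_mult)
  qed
  have "2 * norm S = norm (2 * S)" by (simp add: norm_mult)
  also have "\<dots> \<le> (\<Sum>x\<in>X. \<Sum>y\<in>X. norm ((t x - t y) * (b x - b y)))"
    unfolding S2 by (rule order_trans[OF norm_sum sum_mono[OF norm_sum]])
  also have "\<dots> \<le> (\<Sum>x\<in>X. \<Sum>y\<in>X. 2 * (if bad x y then 1 else 0))"
    by (intro sum_mono pt)
  also have "\<dots> = 2 * real (card {p \<in> X \<times> X. bad (fst p) (snd p)})"
    using card_filter_sum[OF fin, of "\<lambda>p. bad (fst p) (snd p)"] by (simp add: sum_distrib_left)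
  finally have nS: "norm S \<le> real (card {p \<in> X \<times> X. bad (fst p) (snd p)})" by simp
  have "norm (S / N^2) = norm S / (real (card X))^2" by (simp add: norm_divide norm_power nN)
  also have "\<dots> \<le> real (card {p \<in> X \<times> X. bad (fst p) (snd p)}) / (real (card X))^2"
    by (rule divide_right_mono[OF nS]) simp
  finally show ?thesis using eq unfolding t_def b_def N_def bad_def by simp
qed



lemma restrict_in_PiE_bool: "restrict f N \<in> N \<rightarrow>\<^sub>E (UNIV::bool set)"
  by (simp add: PiE_def)

lemma pattern_avg:
  fixes h :: "(nat \<Rightarrow> bool) \<Rightarrow> 'a::real_normed_field"
  assumes fN: "finite N"
  shows "Avg m (\<lambda>z. h (restrict (g z) N))
       = (\<Sum>v\<in>N \<rightarrow>\<^sub>E (UNIV::bool set). of_real (unif_prob m (\<lambda>z. restrict (g z) N = v)) * h v)"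
proof -
  let ?P = "N \<rightarrow>\<^sub>E (UNIV::bool set)"
  have fP: "finite ?P" using fN by simp
  have "(\<Sum>v\<in>?P. of_real (unif_prob m (\<lambda>z. restrict (g z) N = v)) * h v)
      = (\<Sum>v\<in>?P. (\<Sum>z\<in>cube m. if restrict (g z) N = v then h v else 0) / 2^m)"
  proof (rule sum.cong[OF refl])
    fix v
    have c: "real (card {z \<in> cube m. restrict (g z) N = v}) = (\<Sum>z\<in>cube m. if restrict (g z) N = v then 1 else 0)"
      using sum.inter_filter[of "cube m" "\<lambda>_. 1::real" "\<lambda>z. restrict (g z) N = v"] by simp
    have "of_real (unif_prob m (\<lambda>z. restrict (g z) N = v)) * h v
        = of_real (\<Sum>z\<in>cube m. if restrict (g z) N = v then 1 else 0) * h v / 2^m"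
      unfolding unif_prob_def c by (simp add: of_real_divide)
    also have "\<dots> = (\<Sum>z\<in>cube m. of_real (if restrict (g z) N = v then 1 else 0) * h v) / 2^m"
      by (simp only: of_real_sum sum_distrib_right)
    also have "\<dots> = (\<Sum>z\<in>cube m. if restrict (g z) N = v then h v else 0) / 2^m"
      by (intro arg_cong[where f="\<lambda>s. s / 2^m"] sum.cong refl) simp
    finally show "of_real (unif_prob m (\<lambda>z. restrict (g z) N = v)) * h v = (\<Sum>z\<in>cube m. if restrict (g z) N = v then h v else 0) / 2^m" .
  qed
  also have "\<dots> = (\<Sum>z\<in>cube m. \<Sum>v\<in>?P. if restrict (g z) N = v then h v else 0) / 2^m"
    by (simp add: sum_divide_distrib[symmetric] sum.swap[of _ ?P])
  also have "\<dots> = (\<Sum>z\<in>cube m. h (restrict (g z) N)) / 2^m"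
  proof -
    have "(\<Sum>v\<in>?P. if restrict (g z) N = v then h v else 0) = h (restrict (g z) N)" for z
      using fP restrict_in_PiE_bool[of "g z" N] by (simp add: sum.delta)
    then show ?thesis by simp
  qed
  finally show ?thesis unfolding Avg_def by simp
qed

lemma tv_bound:
  fixes h :: "(nat \<Rightarrow> bool) \<Rightarrow> 'a::real_normed_field"
  assumes fN: "finite N" and hn: "\<And>v. norm (h v) \<le> 1"
  shows "norm ((\<Sum>v\<in>N \<rightarrow>\<^sub>E (UNIV::bool set). of_real (unif_prob m (\<lambda>z. restrict (g z) N = v)) * h v)
              - (\<Sum>v\<in>N \<rightarrow>\<^sub>E (UNIV::bool set). h v) / 2 ^ card N) \<le> 2 * tv_marginal_unif m g N"
proof -
  let ?P = "N \<rightarrow>\<^sub>E (UNIV::bool set)"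
  let ?p = "\<lambda>v. unif_prob m (\<lambda>z. restrict (g z) N = v)"
  have "(\<Sum>v\<in>?P. of_real (?p v) * h v) - (\<Sum>v\<in>?P. h v) / 2 ^ card N
      = (\<Sum>v\<in>?P. of_real (?p v - 1 / 2 ^ card N) * h v)"
    by (simp add: sum_divide_distrib sum_subtractf[symmetric] left_diff_distrib of_real_diff)
  also have "norm \<dots> \<le> (\<Sum>v\<in>?P. norm (of_real (?p v - 1 / 2 ^ card N) * h v))"
    by (rule norm_sum)
  also have "\<dots> \<le> (\<Sum>v\<in>?P. \<bar>?p v - 1 / 2 ^ card N\<bar>)"
  proof (rule sum_mono)
    fix v
    have "\<bar>?p v - 1 / 2 ^ card N\<bar> * norm (h v) \<le> \<bar>?p v - 1 / 2 ^ card N\<bar> * 1"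
      by (rule mult_left_mono[OF hn]) simp
    moreover have "norm (of_real (?p v - 1 / 2 ^ card N) * h v) = \<bar>?p v - 1 / 2 ^ card N\<bar> * norm (h v)"
      by (simp only: norm_mult norm_of_real)
    ultimately show "norm (of_real (?p v - 1 / 2 ^ card N) * h v) \<le> \<bar>?p v - 1 / 2 ^ card N\<bar>"
      by simp
  qed
  also have "\<dots> = 2 * tv_marginal_unif m g N" unfolding tv_marginal_unif_def by simp
  finally show ?thesis .
qed

definition Dz :: "nat \<Rightarrow> ((nat \<Rightarrow> bool) \<Rightarrow> (nat \<Rightarrow> bool)) \<Rightarrow> nat set \<Rightarrow> nat set \<Rightarrow> nat \<Rightarrow> nat \<Rightarrow> (nat \<Rightarrow> bool) \<Rightarrow> real" where
  "Dz m g A N q k z = real (card {p \<in> (A \<rightarrow>\<^sub>E (UNIV::bool set)) \<times> (A \<rightarrow>\<^sub>E (UNIV::bool set)).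
      \<not> int q dvd int k * (int (card {j\<in>N. g (mrg A z (fst p)) j}) - int (card {j\<in>N. g (mrg A z (snd p)) j}))})
     / (real (card (A \<rightarrow>\<^sub>E (UNIV::bool set))))^2"

lemma dep_set_sub: "dep_set m g i \<subseteq> {..<m}"
  unfolding dep_set_def by auto

lemma Rs_alt: "finite A \<Longrightarrow> Rs A F z = (\<Sum>x\<in>A \<rightarrow>\<^sub>E (UNIV::bool set). F (mrg A z x)) / of_nat (card (A \<rightarrow>\<^sub>E (UNIV::bool set)))"
  unfolding Rs_def by (simp add: card_PiE_bool)

lemma cov_link:
  fixes T :: "nat \<Rightarrow> 'a::real_normed_field" and q k :: nat
  assumes A: "A = dep_set m g i"
    and Tn: "\<And>u. norm (T u) \<le> 1"
    and Tc: "\<And>u v. int q dvd int k * (int u - int v) \<Longrightarrow> T u = T v"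
  shows "norm (Avg m (\<lambda>z. T (card {j\<in>N. g z j}) * (if g z i then 1 else 0))
             - Avg m (\<lambda>z. T (card {j\<in>N. g z j})) * Avg m (\<lambda>z. if g z i then 1 else 0))
         \<le> Avg m (Dz m g A N q k)"
proof -
  have Am: "A \<subseteq> {..<m}" using A dep_set_sub by simp
  have fA: "finite A" using Am finite_subset by blast
  define b where "b z = (if g z i then 1 else (0::'a))" for z
  define t where "t z = T (card {j\<in>N. g z j})" for z
  have db: "dep_on m A b" unfolding b_def A
    by (rule dep_onI) (metis loc)
  obtain z0 where z0: "z0 \<in> cube m" using cube_nonempty by blast
  define \<beta> where "\<beta> = Rs A b z0"
  have d0: "dep_on m {} (Rs A b)" using Rs_dep[OF db Am] by simp
  have bc: "Rs A b z = \<beta>" if "z \<in> cube m" for z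
    unfolding \<beta>_def by (rule dep_on_empty_const[OF d0 that z0])
  have Eb: "Avg m b = \<beta>"
  proof -
    have "Avg m b = Avg m (Rs A b)" by (rule Avg_Rs[OF Am, symmetric])
    also have "\<dots> = Avg m (\<lambda>_. \<beta>)" using bc by (rule Avg_cong)
    finally show ?thesis by (simp add: Avg_const)
  qed
  have "Avg m (\<lambda>z. t z * b z) - Avg m t * Avg m b
      = Avg m (Rs A (\<lambda>z. t z * b z)) - Avg m (Rs A t) * \<beta>"
    using Avg_Rs[OF Am, of "\<lambda>z. t z * b z"] Avg_Rs[OF Am, of t] Eb by simp
  also have "\<dots> = Avg m (\<lambda>z. Rs A (\<lambda>z. t z * b z) z - Rs A t z * Rs A b z)"
  proof -
    have "Avg m (\<lambda>z. Rs A t z * Rs A b z) = Avg m (\<lambda>z. Rs A t z * \<beta>)"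
      using bc by (intro Avg_cong) simp
    then show ?thesis by (simp add: Avg_diff Avg_multc)
  qed
  finally have eq: "Avg m (\<lambda>z. t z * b z) - Avg m t * Avg m b = \<dots>" .
  have "norm \<dots> \<le> Avg m (\<lambda>z. norm (Rs A (\<lambda>z. t z * b z) z - Rs A t z * Rs A b z))"
    by (rule norm_Avg)
  also have "\<dots> \<le> Avg m (Dz m g A N q k)"
  proof (rule Avg_mono)
    fix z assume z: "z \<in> cube m"
    let ?X = "A \<rightarrow>\<^sub>E (UNIV::bool set)"
    have "norm ((\<Sum>x\<in>?X. T (card {j\<in>N. g (mrg A z x) j}) * (if g (mrg A z x) i then 1 else 0)) / of_nat (card ?X)
            - (\<Sum>x\<in>?X. T (card {j\<in>N. g (mrg A z x) j})) / of_nat (card ?X) * ((\<Sum>x\<in>?X. (if g (mrg A z x) i then 1 else 0)) / of_nat (card ?X)))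
     \<le> real (card {p \<in> ?X \<times> ?X. \<not> int q dvd int k * (int (card {j\<in>N. g (mrg A z (fst p)) j}) - int (card {j\<in>N. g (mrg A z (snd p)) j}))}) / (real (card ?X))^2"
      by (rule fiber_cov[where T=T and w="\<lambda>x. card {j\<in>N. g (mrg A z x) j}", OF _ _ Tn Tc])
         (use fA in \<open>auto simp: PiE_eq_empty_iff\<close>)
    then show "norm (Rs A (\<lambda>z. t z * b z) z - Rs A t z * Rs A b z) \<le> Dz m g A N q k z"
      unfolding Dz_def Rs_alt[OF fA] t_def b_def by simp
  qed
  finally show ?thesis using eq unfolding t_def b_def by simp
qed

lemma norm_link:
  fixes q k :: nat
  assumes Am: "A \<subseteq> {..<m}" and q: "q \<ge> 2"
  shows "Avg m (\<lambda>z. cmod (Rs A (\<lambda>z. cis (2*pi*k*card {j\<in>N. g z j}/q)) z))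
         \<le> 1 - Avg m (Dz m g A N q k) / (real q)^2"
proof -
  have fA: "finite A" using Am finite_subset by blast
  have "Avg m (\<lambda>z. cmod (Rs A (\<lambda>z. cis (2*pi*k*card {j\<in>N. g z j}/q)) z))
     \<le> Avg m (\<lambda>z. 1 - Dz m g A N q k z / (real q)^2)"
  proof (rule Avg_mono)
    fix z assume z: "z \<in> cube m"
    show "cmod (Rs A (\<lambda>z. cis (2*pi*k*card {j\<in>N. g z j}/q)) z) \<le> 1 - Dz m g A N q k z / (real q)^2"
      unfolding Rs_alt[OF fA] Dz_def
      by (rule fiber_norm[where w="\<lambda>x. card {j\<in>N. g (mrg A z x) j}", OF _ _ q])
         (use fA in \<open>auto simp: PiE_eq_empty_iff\<close>)
  qed
  also have "\<dots> = 1 - Avg m (Dz m g A N q k) / (real q)^2"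
    using Avg_diff[of m "\<lambda>_. 1" "\<lambda>z. Dz m g A N q k z / (real q)^2"]
    by (simp add: Avg_const Avg_multc[symmetric] divide_inverse)
  finally show ?thesis .
qed



lemma order_facts:
  fixes q k :: nat
  assumes q: "q \<ge> 3" and k1: "1 \<le> k" and kq: "k < q" and k2: "2 * k \<noteq> q"
  defines "q' \<equiv> q div gcd k q"
  shows "\<And>e::int. int q dvd int k * e \<longleftrightarrow> int q' dvd e" and "q' \<ge> 3"
proof -
  define g0 where "g0 = gcd k q"
  define k' where "k' = k div g0"
  have g0p: "g0 > 0" unfolding g0_def using k1 by simp
  have qq: "q = g0 * q'" unfolding q'_def g0_def by simp
  have kk: "k = g0 * k'" unfolding k'_def g0_def by simp
  have cop: "coprime q' k'" unfolding q'_def k'_def g0_def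
    using div_gcd_coprime[of k q] k1 by (simp add: coprime_commute)
  have copi: "coprime (int q') (int k')" using cop by simp
  show eq: "int q dvd int k * e \<longleftrightarrow> int q' dvd e" for e :: int
  proof -
    have "int q dvd int k * e \<longleftrightarrow> int g0 * int q' dvd int g0 * (int k' * e)"
      by (simp add: qq kk mult.assoc)
    also have "\<dots> \<longleftrightarrow> int q' dvd int k' * e" using g0p by (simp add: dvd_mult_cancel_left)
    also have "\<dots> \<longleftrightarrow> int q' dvd e" using copi by (rule coprime_dvd_mult_right_iff)
    finally show ?thesis .
  qed
  have "q' \<noteq> 0"
  proof
    assume "q' = 0" then have "q = 0" using qq by simp
    then show False using q by simp
  qed
  moreover have "q' \<noteq> 1"
  proof
    assume "q' = 1"
    then have "int q dvd int k * 1" using eq[of 1] by simp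
    then have "q dvd k" by (simp add: int_dvd_int_iff)
    then show False using k1 kq by (simp add: nat_dvd_not_less)
  qed
  moreover have "q' \<noteq> 2"
  proof
    assume "q' = 2"
    then have "int q dvd int k * 2" using eq[of 2] by simp
    then have "q dvd k * 2" by (metis int_dvd_int_iff of_nat_mult of_nat_numeral)
    then obtain c where c: "k * 2 = q * c" by blast
    have "c < 2"
    proof (rule ccontr)
      assume "\<not> c < 2"
      then have "q * 2 \<le> q * c" by (intro mult_le_mono2) simp
      then show False using c kq by linarith
    qed
    moreover have "c \<noteq> 0"
    proof
      assume "c = 0" then have "k * 2 = 0" using c by simp
      then show False using k1 by simp
    qed
    ultimately have "c = 1" by simp
    then show False using c k2 by simp
  qed
  ultimately show "q' \<ge> 3" by linarith
qed

lemma sum_PiE_prod: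
  fixes f :: "'b \<Rightarrow> bool \<Rightarrow> 'a::comm_ring_1"
  assumes "finite N"
  shows "(\<Sum>v\<in>N \<rightarrow>\<^sub>E (UNIV::bool set). \<Prod>j\<in>N. f j (v j)) = (\<Prod>j\<in>N. f j True + f j False)"
proof -
  have "(\<Prod>j\<in>N. \<Sum>u\<in>(UNIV::bool set). f j u) = (\<Sum>v\<in>N \<rightarrow>\<^sub>E (UNIV::bool set). \<Prod>j\<in>N. f j (v j))"
    by (rule prod_sum_PiE) (use assms in auto)
  moreover have "(\<Sum>u\<in>(UNIV::bool set). f j u) = f j True + f j False" for j
    by (simp add: UNIV_bool)
  ultimately show ?thesis by simp
qed

lemma pow_card_prod:
  fixes c :: "'a::comm_ring_1"
  assumes "finite N"
  shows "c ^ card {j\<in>N. v j} = (\<Prod>j\<in>N. if v j then c else 1)"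
  using prod.inter_filter[OF assms, of "\<lambda>_. c" v] by simp

lemma ind_prod:
  fixes c :: "'a::comm_ring_1"
  assumes "finite N" "i \<in> N"
  shows "(if v i then (1::'a) else 0) = (\<Prod>j\<in>N. if j = i then (if v j then 1 else 0) else 1)"
  using assms by (simp add: prod.delta)

lemma prod_remove_const:
  fixes a b :: "'a::comm_ring_1"
  assumes fN: "finite N" and iN: "i \<in> N"
  shows "(\<Prod>j\<in>N. if j = i then a else b) = a * b ^ (card N - 1)"
proof -
  have "(\<Prod>j\<in>N. if j = i then a else b) = (if i = i then a else b) * (\<Prod>j\<in>N - {i}. if j = i then a else b)"
    by (rule prod.remove[OF fN iN])
  also have "(\<Prod>j\<in>N - {i}. if j = i then a else b) = (\<Prod>j\<in>N - {i}. b)"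
    by (rule prod.cong) auto
  finally show ?thesis using fN iN by simp
qed

lemma EU_sums:
  fixes c :: "'a::comm_ring_1"
  assumes fN: "finite N" and iN: "i \<in> N"
  shows "(\<Sum>v\<in>N \<rightarrow>\<^sub>E (UNIV::bool set). c ^ card {j\<in>N. v j} * (if v i then 1 else 0)) = c * (1 + c) ^ (card N - 1)"
    and "(\<Sum>v\<in>N \<rightarrow>\<^sub>E (UNIV::bool set). c ^ card {j\<in>N. v j}) = (1 + c) ^ card N"
    and "(\<Sum>v\<in>N \<rightarrow>\<^sub>E (UNIV::bool set). (if v i then 1 else 0)::'a) = 2 ^ (card N - 1)"
proof -
  have cN: "card (N - {i}) = card N - 1" using fN iN by simp
  have "(\<Sum>v\<in>N \<rightarrow>\<^sub>E (UNIV::bool set). c ^ card {j\<in>N. v j} * (if v i then 1 else 0))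
      = (\<Sum>v\<in>N \<rightarrow>\<^sub>E (UNIV::bool set). \<Prod>j\<in>N. (if v j then c else 1) * (if j = i then (if v j then 1 else 0) else 1))"
    by (simp add: pow_card_prod[OF fN] ind_prod[OF fN iN] prod.distrib)
  also have "\<dots> = (\<Prod>j\<in>N. (c * (if j = i then 1 else 1)) + (1 * (if j = i then 0 else 1)))"
    by (subst sum_PiE_prod[OF fN]) simp
  also have "\<dots> = (\<Prod>j\<in>N. if j = i then c else 1 + c)"
    by (intro prod.cong refl) simp
  also have "\<dots> = c * (1 + c) ^ (card N - 1)" by (rule prod_remove_const[OF fN iN])
  finally show "(\<Sum>v\<in>N \<rightarrow>\<^sub>E (UNIV::bool set). c ^ card {j\<in>N. v j} * (if v i then 1 else 0)) = c * (1 + c) ^ (card N - 1)" .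
  have "(\<Sum>v\<in>N \<rightarrow>\<^sub>E (UNIV::bool set). c ^ card {j\<in>N. v j})
      = (\<Sum>v\<in>N \<rightarrow>\<^sub>E (UNIV::bool set). \<Prod>j\<in>N. (if v j then c else 1))"
    by (simp add: pow_card_prod[OF fN])
  also have "\<dots> = (\<Prod>j\<in>N. c + 1)" by (subst sum_PiE_prod[OF fN]) simp
  finally show "(\<Sum>v\<in>N \<rightarrow>\<^sub>E (UNIV::bool set). c ^ card {j\<in>N. v j}) = (1 + c) ^ card N"
    by (simp add: add.commute)
  have "(\<Sum>v\<in>N \<rightarrow>\<^sub>E (UNIV::bool set). (if v i then 1 else 0)::'a)
      = (\<Sum>v\<in>N \<rightarrow>\<^sub>E (UNIV::bool set). \<Prod>j\<in>N. if j = i then (if v j then 1 else 0) else 1)"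
    by (simp add: ind_prod[OF fN iN])
  also have "\<dots> = (\<Prod>j\<in>N. (if j = i then 1 else 1) + (if j = i then 0 else 1))"
    by (subst sum_PiE_prod[OF fN]) simp
  also have "\<dots> = (\<Prod>j\<in>N. if j = i then 1 else 2)"
    by (intro prod.cong refl) simp
  also have "\<dots> = 1 * 2 ^ (card N - 1)" by (rule prod_remove_const[OF fN iN])
  finally show "(\<Sum>v\<in>N \<rightarrow>\<^sub>E (UNIV::bool set). (if v i then 1 else 0)::'a) = 2 ^ (card N - 1)" by simp
qed

lemma pat_close:
  fixes h :: "(nat \<Rightarrow> bool) \<Rightarrow> 'a::real_normed_field"
  assumes fN: "finite N" and hn: "\<And>v. norm (h v) \<le> 1"
  shows "norm (Avg m (\<lambda>z. h (restrict (g z) N)) - (\<Sum>v\<in>N \<rightarrow>\<^sub>E (UNIV::bool set). h v) / 2 ^ card N)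
         \<le> 2 * tv_marginal_unif m g N"
  using tv_bound[OF fN hn, of m g] pattern_avg[OF fN, of m h g] by simp

lemma card_restrict: "card {j\<in>N. restrict f N j} = card {j\<in>N. f j}"
  by (rule arg_cong[where f=card]) auto



lemma tv_nonneg: "0 \<le> tv_marginal_unif m g N"
  unfolding tv_marginal_unif_def by (intro mult_nonneg_nonneg sum_nonneg) auto

lemma cis_periodic_dvd:
  fixes q' u v :: nat
  assumes "q' > 0" "int q' dvd (int u - int v)"
  shows "cis (2 * pi / q') ^ u = cis (2 * pi / q') ^ v"
proof -
  obtain c where c: "int u - int v = int q' * c" using assms(2) by blast
  have ru: "real u = real v + real q' * of_int c"
    using arg_cong[OF c, of real_of_int] by simp
  have "cis (2 * pi / q') ^ u = cis (real u * (2 * pi / q'))" by (rule DeMoivre)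
  also have "real u * (2 * pi / q') = real v * (2 * pi / q') + 2 * pi * of_int c"
    using assms(1) unfolding ru by (simp add: field_simps)
  also have "cis \<dots> = cis (real v * (2 * pi / q')) * cis (2 * pi * of_int c)" by (rule cis_mult[symmetric])
  also have "cis (2 * pi * of_int c) = 1" by (rule cis_multiple_2pi) simp
  also have "cis (real v * (2 * pi / q')) = cis (2 * pi / q') ^ v" by (rule DeMoivre[symmetric])
  finally show ?thesis by simp
qed

lemma norm_one_plus_cis:
  fixes q' :: nat assumes "q' \<ge> 3"
  shows "1 \<le> cmod (1 + cis (2 * pi / q'))"
proof -
  define \<theta> where "\<theta> = 2 * pi / q'"
  have q0: "real q' \<ge> 3" using assms by simp
  have th0: "0 \<le> \<theta>" unfolding \<theta>_def using q0 by simp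
  have th: "\<theta> \<le> 2 * pi / 3" unfolding \<theta>_def
    by (rule divide_left_mono) (use q0 in auto)
  have c23: "cos (2 * pi / 3) = - 1/2"
    using cos_double_cos[of "pi/3"] cos_60 by (simp add: power2_eq_square)
  have p3: "2 * pi / 3 \<le> pi" "0 \<le> 2 * pi / 3" by simp_all
  have "cos (2 * pi / 3) \<le> cos \<theta>"
    using cos_mono_le_eq[of "2 * pi / 3" \<theta>] th th0 p3 by linarith
  then have ct: "- 1/2 \<le> cos \<theta>" using c23 by simp
  have "(cmod (1 + cis \<theta>))^2 = (1 + cos \<theta>)^2 + (sin \<theta>)^2"
    by (simp add: cmod_power2)
  also have "\<dots> = 2 + 2 * cos \<theta>" using sin_cos_squared_add[of \<theta>] by (simp add: power2_eq_square algebra_simps)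
  finally have "1 \<le> (cmod (1 + cis \<theta>))^2" using ct by simp
  then show ?thesis unfolding \<theta>_def by (metis abs_of_nonneg norm_ge_zero one_le_power power2_le_imp_le one_le_numeral order_trans zero_le_one power_one)
qed

lemma norm_cis_minus_one:
  fixes q' :: nat assumes "q' \<ge> 3"
  shows "2 / real q' \<le> cmod (cis (2 * pi / q') - 1)"
proof -
  define \<theta> where "\<theta> = 2 * pi / q'"
  have q2: "q' \<ge> 2" using assms by simp
  have nd: "\<not> int q' dvd 1" using assms by (simp add: zdvd1_eq)
  have "cos (2 * pi * of_int (1::int) / q') \<le> 1 - 2 / (real q')^2" by (rule cos_bound[OF q2 nd])
  then have cb: "cos \<theta> \<le> 1 - 2 / (real q')^2" unfolding \<theta>_def by simp
  have "(cmod (cis \<theta> - 1))^2 = (cos \<theta> - 1)^2 + (sin \<theta>)^2"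
    by (simp add: cmod_power2)
  also have "\<dots> = 2 - 2 * cos \<theta>" using sin_cos_squared_add[of \<theta>] by (simp add: power2_eq_square algebra_simps)
  finally have "(2 / real q')^2 \<le> (cmod (cis \<theta> - 1))^2" using cb by (simp add: power_divide)
  then show ?thesis unfolding \<theta>_def by (rule power2_le_imp_le) simp
qed



lemma card_restrict_if: "card {j\<in>N. if j \<in> N then f j else undefined} = card {j\<in>N. f j}"
  by (rule arg_cong[where f=card]) auto

lemma U_alg:
  fixes z P D :: complex
  assumes "D \<noteq> 0"
  shows "z * P / D - (1 + z) * P / D * (1/2) = P * (z - 1) / (2 * D)"
  using assms by (simp add: field_simps)

lemma block_bound:
  fixes q k t m :: nat and \<epsilon> :: real and i :: nat and N A :: "nat set"
    and g :: "(nat \<Rightarrow> bool) \<Rightarrow> (nat \<Rightarrow> bool)"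
  assumes q3: "q \<ge> 3" and k1: "1 \<le> k" and kq: "k < q" and k2: "2 * k \<noteq> q"
    and iN: "i \<in> N" and fN: "finite N" and sN: "card N \<le> t"
    and tv: "tv_marginal_unif m g N \<le> \<epsilon>" and eps: "\<epsilon> \<le> 1024 * (1 / 2 ^ t)^14"
    and A: "A = dep_set m g i"
  shows "Avg m (\<lambda>z. cmod (Rs A (\<lambda>z. cis (2*pi*k*card {j\<in>N. g z j}/q)) z))
         \<le> 1 - 2048 * (1 / 2 ^ t)^14 / (real q)^2"
proof -
  define p :: real where "p = 1 / 2 ^ t"
  define s where "s = card N"
  define \<Gamma> where "\<Gamma> = Avg m (Dz m g A N q k)"
  define q' where "q' = q div gcd k q"
  have dvdq: "\<And>e::int. int q dvd int k * e \<longleftrightarrow> int q' dvd e"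
    using order_facts(1)[OF q3 k1 kq k2] unfolding q'_def by blast
  have q'3: "q' \<ge> 3" using order_facts(2)[OF q3 k1 kq k2] unfolding q'_def by blast
  have "N \<noteq> {}" using iN by blast
  then have s1: "1 \<le> s" unfolding s_def using fN by (simp add: Suc_le_eq card_gt_0_iff)
  have t1: "1 \<le> t" using s1 sN unfolding s_def by simp
  obtain s' where sS: "s = Suc s'" using s1 by (cases s) auto
  have Am: "A \<subseteq> {..<m}" using A dep_set_sub by simp
  have q2: "q \<ge> 2" using q3 by simp
  have e0: "0 \<le> \<epsilon>" using tv tv_nonneg[of m g N] by linarith
  have p0: "0 < p" unfolding p_def by simp
  have "(2::real) ^ 1 \<le> 2 ^ t" by (rule power_increasing[OF t1]) simp
  then have ph: "p \<le> 1/2" unfolding p_def by (intro divide_left_mono) auto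
  have sp: "p \<le> 1 / 2 ^ s" unfolding p_def s_def
    by (rule divide_left_mono) (use sN in \<open>auto simp: power_increasing\<close>)
  have tvb: "tv_marginal_unif m g N \<le> \<epsilon>" by (rule tv)
  have main: "Avg m (\<lambda>z. cmod (Rs A (\<lambda>z. cis (2*pi*k*card {j\<in>N. g z j}/q)) z)) \<le> 1 - \<Gamma> / (real q)^2"
    unfolding \<Gamma>_def by (rule norm_link[OF Am q2])
  have key: "2048 * p^14 \<le> \<Gamma>"
  proof (cases "s < q'")
    case True
    note sq = True
    define T1 where "T1 u = (if int q' dvd int u then 1 else (0::real))" for u :: nat
    have Tn: "norm (T1 u) \<le> 1" for u unfolding T1_def by simp
    have Tc: "T1 u = T1 v" if "int q dvd int k * (int u - int v)" for u v
    proof -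
      have "int q' dvd (int u - int v)" using that dvdq by blast
      then have "int q' dvd (int u - int v) + int v \<longleftrightarrow> int q' dvd int v"
        by (rule dvd_add_right_iff)
      then have "int q' dvd int u \<longleftrightarrow> int q' dvd int v" by simp
      then show ?thesis unfolding T1_def by simp
    qed
    have cl: "norm (Avg m (\<lambda>z. T1 (card {j\<in>N. g z j}) * (if g z i then 1 else 0))
             - Avg m (\<lambda>z. T1 (card {j\<in>N. g z j})) * Avg m (\<lambda>z. if g z i then 1 else 0)) \<le> \<Gamma>"
      unfolding \<Gamma>_def by (rule cov_link[OF A Tn Tc])
    have z1: "Avg m (\<lambda>z. T1 (card {j\<in>N. g z j}) * (if g z i then 1 else 0)) = 0"
    proof -
      have "T1 (card {j\<in>N. g z j}) * (if g z i then 1 else 0) = 0" for z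
      proof (cases "g z i")
        case True
        have "{j\<in>N. g z j} \<noteq> {}" using True iN by blast
        then have w1: "1 \<le> card {j\<in>N. g z j}" using fN by (simp add: Suc_le_eq card_gt_0_iff)
        have w2: "card {j\<in>N. g z j} \<le> s" unfolding s_def using fN by (intro card_mono) auto
        have "\<not> int q' dvd int (card {j\<in>N. g z j})"
        proof
          assume "int q' dvd int (card {j\<in>N. g z j})"
          then have "q' dvd card {j\<in>N. g z j}" by simp
          then have "q' \<le> card {j\<in>N. g z j}" using w1 by (simp add: dvd_imp_le)
          then show False using w2 sq by simp
        qed
        then show ?thesis unfolding T1_def by simp
      qed simp
      then have "Avg m (\<lambda>z. T1 (card {j\<in>N. g z j}) * (if g z i then 1 else 0)) = Avg m (\<lambda>_. 0)"
        by (intro Avg_cong) blast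
      then show ?thesis by (simp add: Avg_const)
    qed
    have hT: "norm (Avg m (\<lambda>z. T1 (card {j\<in>N. g z j})) - (\<Sum>v\<in>N \<rightarrow>\<^sub>E (UNIV::bool set). T1 (card {j\<in>N. v j})) / 2 ^ card N) \<le> 2 * \<epsilon>"
      using pat_close[OF fN, of "\<lambda>v. T1 (card {j\<in>N. v j})" m g] Tn tvb by (simp add: card_restrict card_restrict_if)
    have sumT: "1 \<le> (\<Sum>v\<in>N \<rightarrow>\<^sub>E (UNIV::bool set). T1 (card {j\<in>N. v j}))"
    proof -
      define v0 where "v0 = restrict (\<lambda>_. False) N"
      have v0P: "v0 \<in> N \<rightarrow>\<^sub>E (UNIV::bool set)" unfolding v0_def by (simp add: PiE_def)
      have "T1 (card {j\<in>N. v0 j}) = 1" unfolding v0_def T1_def by simp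
      moreover have "T1 (card {j\<in>N. v0 j}) \<le> (\<Sum>v\<in>N \<rightarrow>\<^sub>E (UNIV::bool set). T1 (card {j\<in>N. v j}))"
        by (rule member_le_sum[OF v0P]) (auto simp: T1_def fN)
      ultimately show ?thesis by simp
    qed
    have AT: "1 / 2 ^ s - 2 * \<epsilon> \<le> Avg m (\<lambda>z. T1 (card {j\<in>N. g z j}))"
    proof -
      have "1 / 2 ^ s \<le> (\<Sum>v\<in>N \<rightarrow>\<^sub>E (UNIV::bool set). T1 (card {j\<in>N. v j})) / 2 ^ card N"
        unfolding s_def using sumT by (simp add: divide_right_mono)
      then show ?thesis using hT by (simp add: abs_le_iff)
    qed
    have hB: "norm (Avg m (\<lambda>z. (if g z i then 1 else 0::real)) - (\<Sum>v\<in>N \<rightarrow>\<^sub>E (UNIV::bool set). (if v i then 1 else 0::real)) / 2 ^ card N) \<le> 2 * \<epsilon>"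
      using pat_close[OF fN, of "\<lambda>v. if v i then 1 else 0::real" m g] tvb iN by force
    have sB: "(\<Sum>v\<in>N \<rightarrow>\<^sub>E (UNIV::bool set). (if v i then 1 else 0::real)) / 2 ^ card N = 1/2"
    proof -
      have "(\<Sum>v\<in>N \<rightarrow>\<^sub>E (UNIV::bool set). (if v i then 1 else 0::real)) = 2 ^ (card N - 1)"
        by (rule EU_sums(3)[OF fN iN])
      moreover have "(2::real) ^ card N = 2 * 2 ^ (card N - 1)" using sS unfolding s_def by simp
      ultimately show ?thesis by simp
    qed
    have AB: "1/2 - 2 * \<epsilon> \<le> Avg m (\<lambda>z. (if g z i then 1 else 0::real))"
      using hB sB by (simp add: abs_le_iff)
    have p13: "p^13 \<le> (1/2)^13" by (rule power_mono[OF ph]) (use p0 in simp)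
    have p14: "p^14 \<le> p / 8192"
    proof -
      have "p^14 = p * p^13" using power_add[of p 1 13] by simp
      also have "\<dots> \<le> p * (1/2)^13" by (rule mult_left_mono[OF p13]) (use p0 in simp)
      also have "(1/2::real)^13 = 1/8192" by (simp add: power_divide)
      finally show ?thesis by simp
    qed
    have ep: "\<epsilon> \<le> p / 8" using eps p14 unfolding p_def by simp
    have f1: "3 * p / 4 \<le> 1 / 2 ^ s - 2 * \<epsilon>" using sp ep by simp
    have f2: "3 / 8 \<le> 1/2 - 2 * \<epsilon>" using ep ph by simp
    have "(3 * p / 4) * (3 / 8) \<le> Avg m (\<lambda>z. T1 (card {j\<in>N. g z j})) * Avg m (\<lambda>z. (if g z i then 1 else 0::real))"
      by (rule mult_mono) (use f1 f2 AT AB p0 in \<open>linarith+\<close>)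
    moreover have "norm (Avg m (\<lambda>z. T1 (card {j\<in>N. g z j})) * Avg m (\<lambda>z. (if g z i then 1 else 0::real)))
        = Avg m (\<lambda>z. T1 (card {j\<in>N. g z j})) * Avg m (\<lambda>z. (if g z i then 1 else 0::real))"
      using AT AB f1 f2 p0 by (simp add: abs_mult)
    ultimately have "(3 * p / 4) * (3 / 8) \<le> \<Gamma>" using cl z1 by simp
    moreover have "2048 * p^14 \<le> (3 * p / 4) * (3 / 8)" using p14 p0 by simp
    ultimately show ?thesis by linarith
  next
    case False
    then have qs: "q' \<le> s" by simp
    define \<zeta> where "\<zeta> = cis (2 * pi / q')"
    define T2 where "T2 u = \<zeta> ^ u" for u :: nat
    have Tn: "norm (T2 u) \<le> 1" for u unfolding T2_def \<zeta>_def by (simp add: norm_power)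
    have Tc: "T2 u = T2 v" if "int q dvd int k * (int u - int v)" for u v
      unfolding T2_def \<zeta>_def using that dvdq q'3 by (intro cis_periodic_dvd) auto
    have cl: "norm (Avg m (\<lambda>z. T2 (card {j\<in>N. g z j}) * (if g z i then 1 else 0))
             - Avg m (\<lambda>z. T2 (card {j\<in>N. g z j})) * Avg m (\<lambda>z. if g z i then 1 else 0)) \<le> \<Gamma>"
      unfolding \<Gamma>_def by (rule cov_link[OF A Tn Tc])
    define A1 where "A1 = Avg m (\<lambda>z. T2 (card {j\<in>N. g z j}) * (if g z i then 1 else 0))"
    define A2 where "A2 = Avg m (\<lambda>z. T2 (card {j\<in>N. g z j}))"
    define A3 where "A3 = Avg m (\<lambda>z. (if g z i then 1 else 0::complex))"
    define U1 where "U1 = \<zeta> * (1 + \<zeta>) ^ (s - 1) / 2 ^ s"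
    define U2 where "U2 = (1 + \<zeta>) ^ s / 2 ^ s"
    define U3 where "U3 = (1/2::complex)"
    have h1: "norm (A1 - U1) \<le> 2 * \<epsilon>"
    proof -
      have "norm (A1 - (\<Sum>v\<in>N \<rightarrow>\<^sub>E (UNIV::bool set). T2 (card {j\<in>N. v j}) * (if v i then 1 else 0)) / 2 ^ card N) \<le> 2 * \<epsilon>"
      proof -
        have hn1: "norm (T2 (card {j\<in>N. v j}) * (if v i then 1 else 0::complex)) \<le> 1" for v
          unfolding T2_def \<zeta>_def by (simp add: norm_mult norm_power)
        show ?thesis
          using pat_close[where h="\<lambda>v. T2 (card {j\<in>N. v j}) * (if v i then 1 else 0::complex)" and m=m and g=g, OF fN hn1] tvb iN
          unfolding A1_def by (simp add: card_restrict card_restrict_if)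
      qed
      moreover have "(\<Sum>v\<in>N \<rightarrow>\<^sub>E (UNIV::bool set). T2 (card {j\<in>N. v j}) * (if v i then 1 else 0)) = \<zeta> * (1 + \<zeta>) ^ (s - 1)"
        unfolding T2_def s_def by (rule EU_sums(1)[OF fN iN])
      ultimately show ?thesis unfolding U1_def s_def by simp
    qed
    have h2: "norm (A2 - U2) \<le> 2 * \<epsilon>"
    proof -
      have "norm (A2 - (\<Sum>v\<in>N \<rightarrow>\<^sub>E (UNIV::bool set). T2 (card {j\<in>N. v j})) / 2 ^ card N) \<le> 2 * \<epsilon>"
        using pat_close[OF fN, of "\<lambda>v. T2 (card {j\<in>N. v j})" m g] Tn tvb
        unfolding A2_def by (simp add: card_restrict card_restrict_if)
      moreover have "(\<Sum>v\<in>N \<rightarrow>\<^sub>E (UNIV::bool set). T2 (card {j\<in>N. v j})) = (1 + \<zeta>) ^ s"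
        unfolding T2_def s_def by (rule EU_sums(2)[OF fN iN])
      ultimately show ?thesis unfolding U2_def s_def by simp
    qed
    have h3: "norm (A3 - U3) \<le> 2 * \<epsilon>"
    proof -
      have "norm (A3 - (\<Sum>v\<in>N \<rightarrow>\<^sub>E (UNIV::bool set). (if v i then 1 else 0::complex)) / 2 ^ card N) \<le> 2 * \<epsilon>"
        using pat_close[OF fN, of "\<lambda>v. if v i then 1 else 0::complex" m g] tvb iN
        unfolding A3_def by force
      moreover have "(\<Sum>v\<in>N \<rightarrow>\<^sub>E (UNIV::bool set). (if v i then 1 else 0::complex)) = 2 ^ (card N - 1)"
        by (rule EU_sums(3)[OF fN iN])
      moreover have "(2::complex) ^ card N = 2 * 2 ^ (card N - 1)" using sS unfolding s_def by simp
      ultimately show ?thesis unfolding U3_def by simp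
    qed
    have nA2: "norm A2 \<le> 1"
    proof -
      have "norm A2 \<le> Avg m (\<lambda>z. norm (T2 (card {j\<in>N. g z j})))" unfolding A2_def by (rule norm_Avg)
      also have "\<dots> \<le> Avg m (\<lambda>z. 1)" by (rule Avg_mono) (rule Tn)
      finally show ?thesis by (simp add: Avg_const)
    qed
    have nU3: "norm U3 \<le> 1" unfolding U3_def by simp
    have diff: "norm ((A1 - A2 * A3) - (U1 - U2 * U3)) \<le> 6 * \<epsilon>"
    proof -
      have "(A1 - A2 * A3) - (U1 - U2 * U3) = (A1 - U1) - A2 * (A3 - U3) - (A2 - U2) * U3"
        by (simp add: algebra_simps)
      also have "norm \<dots> \<le> norm (A1 - U1) + norm A2 * norm (A3 - U3) + norm (A2 - U2) * norm U3"
      proof -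
        have a: "norm ((A1 - U1) - A2 * (A3 - U3) - (A2 - U2) * U3) \<le> norm ((A1 - U1) - A2 * (A3 - U3)) + norm ((A2 - U2) * U3)"
          by (rule norm_triangle_ineq4)
        have b: "norm ((A1 - U1) - A2 * (A3 - U3)) \<le> norm (A1 - U1) + norm (A2 * (A3 - U3))"
          by (rule norm_triangle_ineq4)
        show ?thesis using a b by (simp add: norm_mult)
      qed
      also have "\<dots> \<le> 2 * \<epsilon> + 1 * (2 * \<epsilon>) + (2 * \<epsilon>) * 1"
        by (intro add_mono mult_mono h1 h2 h3 nA2 nU3) (use e0 in auto)
      finally show ?thesis by simp
    qed
    have UU: "norm (U1 - U2 * U3) \<ge> 1 / (real q' * 2 ^ s)"
    proof -
      obtain s' where s': "s = Suc s'" using s1 by (cases s) auto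
      have "U1 - U2 * U3 = (1 + \<zeta>) ^ s' * (\<zeta> - 1) / (2 * 2 ^ s)"
      proof -
        have "U2 = (1 + \<zeta>) * (1 + \<zeta>) ^ s' / 2 ^ s" unfolding U2_def using s' by simp
        moreover have "U1 = \<zeta> * (1 + \<zeta>) ^ s' / 2 ^ s" unfolding U1_def using s' by simp
        ultimately show ?thesis unfolding U3_def using U_alg[of "2 ^ s" \<zeta> "(1 + \<zeta>) ^ s'"] by simp
      qed
      then have "norm (U1 - U2 * U3) = (cmod (1 + \<zeta>)) ^ s' * cmod (\<zeta> - 1) / (2 * 2 ^ s)"
        by (simp add: norm_mult norm_divide norm_power)
      moreover have "1 \<le> (cmod (1 + \<zeta>)) ^ s'"
        using norm_one_plus_cis[OF q'3] unfolding \<zeta>_def by (rule one_le_power)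
      moreover have "2 / real q' \<le> cmod (\<zeta> - 1)" unfolding \<zeta>_def by (rule norm_cis_minus_one[OF q'3])
      ultimately have "1 * (2 / real q') \<le> (cmod (1 + \<zeta>)) ^ s' * cmod (\<zeta> - 1)"
        by (intro mult_mono) auto
      then have "1 * (2 / real q') / (2 * 2 ^ s) \<le> (cmod (1 + \<zeta>)) ^ s' * cmod (\<zeta> - 1) / (2 * 2 ^ s)"
        by (rule divide_right_mono) simp
      then have "1 * (2 / real q') / (2 * 2 ^ s) \<le> norm (U1 - U2 * U3)"
        using \<open>norm (U1 - U2 * U3) = _\<close> by simp
      then show ?thesis using q'3 by (simp add: field_simps)
    qed
    have qp: "p^2 \<le> 1 / (real q' * 2 ^ s)"
    proof -
      have "real q' \<le> real t" using qs sN unfolding s_def by simp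
      moreover have "real t \<le> 2 ^ t"
      proof -
        have "real t \<le> real (2 ^ t)" using less_exp[of t] by simp
        then show ?thesis by simp
      qed
      moreover have "(2::real) ^ s \<le> 2 ^ t" using sN unfolding s_def by (simp add: power_increasing)
      ultimately have a: "real q' \<le> 2 ^ t" and b: "(2::real) ^ s \<le> 2 ^ t" by linarith+
      have "real q' * 2 ^ s \<le> 2 ^ t * 2 ^ t"
        by (rule mult_mono[OF a b]) auto
      then have "1 / (2 ^ t * 2 ^ t) \<le> 1 / (real q' * 2 ^ s)"
        using q'3 by (intro divide_left_mono) auto
      then show ?thesis unfolding p_def by (simp add: power2_eq_square)
    qed
    have t3: "3 \<le> t" using q'3 qs sN unfolding s_def by simp
    have p8: "p \<le> 1/8"
    proof -
      have "(2::real) ^ 3 \<le> 2 ^ t" by (rule power_increasing[OF t3]) simp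
      then show ?thesis unfolding p_def by (simp add: divide_le_eq)
    qed
    have p12: "p^12 \<le> (1/8)^12" by (rule power_mono[OF p8]) (use p0 in simp)
    have p14: "p^14 \<le> p^2 / 8192"
    proof -
      have "p^14 = p^2 * p^12" using power_add[of p 2 12] by simp
      also have "\<dots> \<le> p^2 * (1/8)^12" by (rule mult_left_mono[OF p12]) simp
      also have "\<dots> \<le> p^2 * (1/8192)"
        by (rule mult_left_mono) (simp_all add: power_divide)
      also have "\<dots> = p^2 / 8192" by simp
      finally show ?thesis .
    qed
    have "norm (U1 - U2 * U3) - 6 * \<epsilon> \<le> norm (A1 - A2 * A3)"
      using diff norm_triangle_ineq2[of "U1 - U2 * U3" "A1 - A2 * A3"] by (simp add: norm_minus_commute)
    then have "1 / (real q' * 2 ^ s) - 6 * \<epsilon> \<le> \<Gamma>"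
      using cl UU unfolding A1_def A2_def A3_def by (simp add: T2_def) 
    then show ?thesis using qp p14 eps unfolding p_def[symmetric] by linarith
  qed
  have "\<Gamma> / (real q)^2 \<ge> 2048 * p^14 / (real q)^2"
    by (rule divide_right_mono[OF key]) simp
  then show ?thesis using main unfolding p_def by linarith
qed



lemma prod_resample:
  fixes \<phi> :: "nat \<Rightarrow> (nat \<Rightarrow> bool) \<Rightarrow> complex" and A U :: "nat \<Rightarrow> nat set" and r :: nat
  assumes AU: "\<And>a. a < r \<Longrightarrow> A a \<subseteq> U a"
    and Um: "\<And>a. a < r \<Longrightarrow> U a \<subseteq> {..<m}"
    and disj: "\<And>a b. a < r \<Longrightarrow> b < r \<Longrightarrow> a \<noteq> b \<Longrightarrow> U a \<inter> U b = {}"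
    and d\<phi>: "\<And>a. a < r \<Longrightarrow> dep_on m (U a) (\<phi> a)"
  shows "dep_on m ({..<m} - (\<Union>a<r. A a)) G \<Longrightarrow>
         Avg m (\<lambda>z. G z * (\<Prod>a<r. \<phi> a z)) = Avg m (\<lambda>z. G z * (\<Prod>a<r. Rs (A a) (\<phi> a) z))"
  using assms
proof (induction r arbitrary: G)
  case 0 then show ?case by simp
next
  case (Suc r)
  have AU': "\<And>a. a < r \<Longrightarrow> A a \<subseteq> U a" using Suc.prems(2) by simp
  have Um': "\<And>a. a < r \<Longrightarrow> U a \<subseteq> {..<m}" using Suc.prems(3) by simp
  have disj': "\<And>a b. a < r \<Longrightarrow> b < r \<Longrightarrow> a \<noteq> b \<Longrightarrow> U a \<inter> U b = {}" using Suc.prems(4) by simp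
  have d\<phi>': "\<And>a. a < r \<Longrightarrow> dep_on m (U a) (\<phi> a)" using Suc.prems(5) by simp
  have Arm: "A r \<subseteq> {..<m}" using Suc.prems(2,3) by force
  have dG: "dep_on m ({..<m} - (\<Union>a<Suc r. A a)) G" by (rule Suc.prems(1))
  define H where "H z = G z * (\<Prod>a<r. \<phi> a z)" for z
  have dH: "dep_on m (({..<m} - (\<Union>a<Suc r. A a)) \<union> (\<Union>a<r. U a)) H"
    unfolding H_def by (rule dep_on_mult[OF dG dep_on_prod]) (rule d\<phi>')
  have HA: "(({..<m} - (\<Union>a<Suc r. A a)) \<union> (\<Union>a<r. U a)) \<inter> A r = {}"
  proof -
    { fix x a assume "x \<in> U a" "x \<in> A r" "a < r"
      then have "x \<in> U a \<inter> U r" using Suc.prems(2) by auto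
      then have False using Suc.prems(4)[of a r] \<open>a < r\<close> by auto }
    then show ?thesis by (auto simp: lessThan_Suc)
  qed
  have "Avg m (\<lambda>z. G z * (\<Prod>a<Suc r. \<phi> a z)) = Avg m (\<lambda>z. H z * \<phi> r z)"
    unfolding H_def by (simp add: mult.assoc)
  also have "\<dots> = Avg m (Rs (A r) (\<lambda>z. H z * \<phi> r z))" by (rule Avg_Rs[OF Arm, symmetric])
  also have "\<dots> = Avg m (\<lambda>z. H z * Rs (A r) (\<phi> r) z)"
    by (rule Avg_cong) (rule Rs_mult_left[OF dH HA Arm])
  also have "\<dots> = Avg m (\<lambda>z. (G z * Rs (A r) (\<phi> r) z) * (\<Prod>a<r. \<phi> a z))"
    unfolding H_def by (simp add: ac_simps)
  also have "\<dots> = Avg m (\<lambda>z. (G z * Rs (A r) (\<phi> r) z) * (\<Prod>a<r. Rs (A a) (\<phi> a) z))"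
  proof (rule Suc.IH[OF _ AU' Um' disj' d\<phi>'])
    have d1: "dep_on m (U r - A r) (Rs (A r) (\<phi> r))"
      by (rule Rs_dep[OF _ Arm]) (rule Suc.prems(5), simp)
    have "dep_on m (({..<m} - (\<Union>a<Suc r. A a)) \<union> (U r - A r)) (\<lambda>z. G z * Rs (A r) (\<phi> r) z)"
      by (rule dep_on_mult[OF dG d1])
    moreover have "({..<m} - (\<Union>a<Suc r. A a)) \<union> (U r - A r) \<subseteq> {..<m} - (\<Union>a<r. A a)"
    proof -
      { fix x a assume "x \<in> U r" "x \<in> A a" "a < r"
        then have "x \<in> U a \<inter> U r" using Suc.prems(2)[of a] by auto
        then have False using Suc.prems(4)[of a r] \<open>a < r\<close> by auto }
      moreover have "U r \<subseteq> {..<m}" using Suc.prems(3) by simp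
      ultimately show ?thesis by (auto simp: lessThan_Suc)
    qed
    ultimately show "dep_on m ({..<m} - (\<Union>a<r. A a)) (\<lambda>z. G z * Rs (A r) (\<phi> r) z)"
      by (rule dep_on_mono)
  qed
  also have "\<dots> = Avg m (\<lambda>z. G z * (\<Prod>a<Suc r. Rs (A a) (\<phi> a) z))"
    by (simp add: ac_simps)
  finally show ?case .
qed

lemma prod_bound:
  fixes \<phi> :: "nat \<Rightarrow> (nat \<Rightarrow> bool) \<Rightarrow> complex" and A U :: "nat \<Rightarrow> nat set" and r :: nat
  assumes AU: "\<And>a. a < r \<Longrightarrow> A a \<subseteq> U a"
    and Um: "\<And>a. a < r \<Longrightarrow> U a \<subseteq> {..<m}"
    and disj: "\<And>a b. a < r \<Longrightarrow> b < r \<Longrightarrow> a \<noteq> b \<Longrightarrow> U a \<inter> U b = {}"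
    and d\<phi>: "\<And>a. a < r \<Longrightarrow> dep_on m (U a) (\<phi> a)"
    and dG: "dep_on m ({..<m} - (\<Union>a<r. A a)) G"
    and nG: "\<And>z. cmod (G z) \<le> 1"
  shows "cmod (Avg m (\<lambda>z. G z * (\<Prod>a<r. \<phi> a z))) \<le> (\<Prod>a<r. Avg m (\<lambda>z. cmod (Rs (A a) (\<phi> a) z)))"
proof -
  have "cmod (Avg m (\<lambda>z. G z * (\<Prod>a<r. \<phi> a z))) = cmod (Avg m (\<lambda>z. G z * (\<Prod>a<r. Rs (A a) (\<phi> a) z)))"
    using prod_resample[OF AU Um disj d\<phi> dG] by simp
  also have "\<dots> \<le> Avg m (\<lambda>z. cmod (G z * (\<Prod>a<r. Rs (A a) (\<phi> a) z)))" by (rule norm_Avg)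
  also have "\<dots> \<le> Avg m (\<lambda>z. \<Prod>a<r. cmod (Rs (A a) (\<phi> a) z))"
  proof (rule Avg_mono)
    fix z
    have "cmod (G z * (\<Prod>a<r. Rs (A a) (\<phi> a) z)) = cmod (G z) * (\<Prod>a<r. cmod (Rs (A a) (\<phi> a) z))"
      by (simp add: norm_mult prod_norm)
    also have "\<dots> \<le> 1 * (\<Prod>a<r. cmod (Rs (A a) (\<phi> a) z))"
      by (rule mult_right_mono[OF nG]) (simp add: prod_nonneg)
    finally show "cmod (G z * (\<Prod>a<r. Rs (A a) (\<phi> a) z)) \<le> (\<Prod>a<r. cmod (Rs (A a) (\<phi> a) z))" by simp
  qed
  also have "\<dots> = (\<Prod>a<r. Avg m (\<lambda>z. cmod (Rs (A a) (\<phi> a) z)))"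
  proof (rule indep_prod[where S=U])
    fix a assume a: "a < r"
    have Am: "A a \<subseteq> {..<m}" using AU Um a by blast
    have "dep_on m (U a - A a) (Rs (A a) (\<phi> a))" by (rule Rs_dep[OF d\<phi>[OF a] Am])
    then have "dep_on m (U a) (Rs (A a) (\<phi> a))" by (rule dep_on_mono) auto
    then show "dep_on m (U a) (\<lambda>z. cmod (Rs (A a) (\<phi> a) z))" by (rule dep_on_comp)
  qed (use Um disj in auto)
  finally show ?thesis .
qed



lemma cis_pow_eq: "cis (2 * pi * real k / real q) ^ w = cis (2 * pi * real k * real w / real q)"
  by (simp add: DeMoivre algebra_simps)

lemma cos_sum:
  fixes q :: nat and d :: int
  assumes q0: "q > 0"
  shows "(\<Sum>k<q. cos (2 * pi * real k * of_int d / real q)) = (if int q dvd d then real q else 0)"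
proof -
  define z where "z = cis (2 * pi * of_int d / real q)"
  have zk: "z ^ k = cis (2 * pi * real k * of_int d / real q)" for k
    unfolding z_def DeMoivre by (simp add: algebra_simps)
  have "(\<Sum>k<q. cos (2 * pi * real k * of_int d / real q)) = Re (\<Sum>k<q. z ^ k)"
    by (simp add: zk Re_sum)
  also have "\<dots> = (if int q dvd d then real q else 0)"
  proof (cases "int q dvd d")
    case True
    then obtain c where c: "d = int q * c" by blast
    have "2 * pi * of_int d / real q = 2 * pi * of_int c" using q0 by (simp add: c)
    then have "z = cis (2 * pi * of_int c)" unfolding z_def by simp
    also have "\<dots> = 1" by (rule cis_multiple_2pi) simp
    finally show ?thesis using True by simp
  next
    case False
    have q2: "q \<ge> 2"
    proof (rule ccontr)
      assume "\<not> q \<ge> 2" then have "q = 1" using q0 by simp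
      then show False using False by simp
    qed
    have "Re z = cos (2 * pi * of_int d / real q)" unfolding z_def by simp
    also have "\<dots> \<le> 1 - 2 / (real q)^2" by (rule cos_bound[OF q2 False])
    also have "\<dots> < 1" using q2 by simp
    finally have z1: "z \<noteq> 1" by auto
    have "z ^ q = cis (2 * pi * real q * of_int d / real q)" by (rule zk)
    also have "2 * pi * real q * of_int d / real q = 2 * pi * of_int d" using q0 by simp
    also have "cis (2 * pi * of_int d) = 1" by (rule cis_multiple_2pi) simp
    finally have zq: "z ^ q = 1" .
    have "(\<Sum>k<q. z ^ k) = 0" using sum_gp_strict[of z q] z1 zq by simp
    then show ?thesis using False by simp
  qed
  finally show ?thesis .
qed

lemma ind_fourier:
  fixes q w l :: nat
  assumes q0: "q > 0" and lq: "l < q"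
  shows "(if w mod q = l then 1 else 0::real)
       = (1 / real q) * (\<Sum>k<q. cos (2 * pi * real k * of_int (int w - int l) / real q))"
proof -
  have "int q dvd (int w - int l) \<longleftrightarrow> int w mod int q = int l mod int q"
    by (simp add: mod_eq_dvd_iff)
  also have "\<dots> \<longleftrightarrow> w mod q = l"
  proof -
    have a: "int w mod int q = int (w mod q)" by (simp add: of_nat_mod)
    have b: "int l mod int q = int l" using lq by simp
    show ?thesis by (simp add: a b)
  qed
  finally show ?thesis using cos_sum[OF q0, of "int w - int l"] q0 by simp
qed

lemma Re_Avg: "Re (Avg m F) = Avg m (\<lambda>z. Re (F z))"
proof -
  have e: "Avg m F = (\<Sum>z\<in>cube m. F z) / complex_of_real (2^m)" unfolding Avg_def by simp
  show ?thesis unfolding e Re_divide_of_real Re_sum by (simp add: Avg_def)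
qed

lemma Avg_sum: "Avg m (\<lambda>z. \<Sum>l\<in>L. f l z) = (\<Sum>l\<in>L. Avg m (f l))"
  unfolding Avg_def by (simp add: sum.swap[of _ L] sum_divide_distrib)

lemma unif_Avg: "unif_prob m P = Avg m (\<lambda>z. if P z then 1 else 0)"
proof -
  have "real (card {z \<in> cube m. P z}) = (\<Sum>z\<in>cube m. if P z then 1 else 0)"
    using sum.inter_filter[of "cube m" "\<lambda>_. 1::real" P] by simp
  then show ?thesis unfolding unif_prob_def Avg_def by simp
qed

lemma cos_term_bound:
  fixes W :: "(nat \<Rightarrow> bool) \<Rightarrow> nat" and k q l :: nat
  shows "Avg m (\<lambda>z. cos (2 * pi * real k * of_int (int (W z) - int l) / real q))
         \<le> cmod (Avg m (\<lambda>z. cis (2 * pi * real k * real (W z) / real q)))"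
proof -
  define c where "c = cis (- (2 * pi * real k * real l / real q))"
  have e: "cos (2 * pi * real k * of_int (int (W z) - int l) / real q)
        = Re (cis (2 * pi * real k * real (W z) / real q) * c)" for z
  proof -
    have "cis (2 * pi * real k * real (W z) / real q) * c
        = cis (2 * pi * real k * real (W z) / real q + - (2 * pi * real k * real l / real q))"
      unfolding c_def by (rule cis_mult)
    moreover have "2 * pi * real k * real (W z) / real q + - (2 * pi * real k * real l / real q)
        = 2 * pi * real k * of_int (int (W z) - int l) / real q"
      by (simp add: diff_divide_distrib right_diff_distrib)
    ultimately show ?thesis by simp
  qed
  have "Avg m (\<lambda>z. cos (2 * pi * real k * of_int (int (W z) - int l) / real q))
      = Avg m (\<lambda>z. Re (cis (2 * pi * real k * real (W z) / real q) * c))"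
    by (rule Avg_cong) (rule e)
  also have "\<dots> = Re (Avg m (\<lambda>z. cis (2 * pi * real k * real (W z) / real q) * c))"
    by (rule Re_Avg[symmetric])
  also have "\<dots> = Re (Avg m (\<lambda>z. cis (2 * pi * real k * real (W z) / real q)) * c)"
    by (simp add: Avg_multc)
  also have "\<dots> \<le> cmod (Avg m (\<lambda>z. cis (2 * pi * real k * real (W z) / real q)) * c)"
    by (rule complex_Re_le_cmod)
  also have "\<dots> = cmod (Avg m (\<lambda>z. cis (2 * pi * real k * real (W z) / real q)))"
    unfolding c_def by (simp add: norm_mult)
  finally show ?thesis .
qed

lemma parity_term:
  fixes W :: "(nat \<Rightarrow> bool) \<Rightarrow> nat" and h l :: nat
  assumes h0: "h > 0"
  shows "Avg m (\<lambda>z. cos (2 * pi * real h * of_int (int (W z) - int l) / real (2 * h)))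
         = (-1) ^ l * Avg m (\<lambda>z. (-1) ^ W z)"
proof -
  have e: "cos (2 * pi * real h * of_int (int (W z) - int l) / real (2 * h)) = (-1) ^ l * (-1) ^ W z" for z
  proof -
    have "2 * pi * real h * of_int (int (W z) - int l) / real (2 * h) = real (W z) * pi - real l * pi"
      using h0 by (simp add: field_simps)
    then have "cos (2 * pi * real h * of_int (int (W z) - int l) / real (2 * h)) = cos (real (W z) * pi - real l * pi)"
      by simp
    also have "\<dots> = (-1) ^ W z * (-1) ^ l" by (simp add: cos_diff)
    finally show ?thesis by simp
  qed
  have "Avg m (\<lambda>z. cos (2 * pi * real h * of_int (int (W z) - int l) / real (2 * h)))
      = Avg m (\<lambda>z. (-1) ^ l * (-1) ^ W z)"
    by (rule Avg_cong) (rule e)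
  then show ?thesis by (simp add: Avg_cmult)
qed

lemma pw_conv:
  fixes t :: nat and c :: nat
  shows "(2::real) powr (- 14 * real t + real c) = 2 ^ c * (1 / 2 ^ t) ^ 14"
proof -
  have "(2::real) powr (- 14 * real t + real c) = 2 powr (real c) * 2 powr (- (real (14 * t)))"
    by (simp add: powr_add[symmetric])
  also have "\<dots> = 2 ^ c / 2 ^ (14 * t)"
    using powr_realpow[of 2 "14 * t"] powr_realpow[of 2 c] by (simp add: powr_minus divide_inverse)
  also have "\<dots> = 2 ^ c * (1 / 2 ^ t) ^ 14"
    by (simp add: power_mult power_divide mult.commute[of 14 t])
  finally show ?thesis .
qed



lemma half_bound:
  fixes N :: "nat set" and i :: nat
  assumes fN: "finite N" and iN: "i \<in> N"
  shows "\<bar>Avg m (\<lambda>z. if g z i then 1 else 0::real) - 1/2\<bar> \<le> 2 * tv_marginal_unif m g N"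
proof -
  have c0: "norm (Avg m (\<lambda>z. (\<lambda>v. if v i then 1 else 0::real) (restrict (g z) N)) - (\<Sum>v\<in>N \<rightarrow>\<^sub>E (UNIV::bool set). (\<lambda>v. if v i then 1 else 0::real) v) / 2 ^ card N) \<le> 2 * tv_marginal_unif m g N"
    by (rule pat_close[OF fN]) simp
  have c: "norm (Avg m (\<lambda>z. (if g z i then 1 else 0::real)) - (\<Sum>v\<in>N \<rightarrow>\<^sub>E (UNIV::bool set). (if v i then 1 else 0::real)) / 2 ^ card N) \<le> 2 * tv_marginal_unif m g N"
    using c0 iN by simp
  have "N \<noteq> {}" using iN by blast
  then obtain s' where sS: "card N = Suc s'" using fN by (cases "card N") auto
  have "(\<Sum>v\<in>N \<rightarrow>\<^sub>E (UNIV::bool set). (if v i then 1 else 0::real)) = 2 ^ (card N - 1)"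
    by (rule EU_sums(3)[OF fN iN])
  then have e: "(\<Sum>v\<in>N \<rightarrow>\<^sub>E (UNIV::bool set). (if v i then 1 else 0::real)) / 2 ^ card N = 1/2"
    using sS by simp
  show ?thesis using c unfolding e real_norm_def .
qed

lemma sum_ind_fourier:
  fixes q w :: nat and \<Lambda> :: "nat set"
  assumes q0: "q > 0" and L: "\<Lambda> \<subseteq> {..<q}"
  shows "(if w mod q \<in> \<Lambda> then 1 else 0::real)
       = (\<Sum>l\<in>\<Lambda>. (1 / real q) * (\<Sum>k<q. cos (2 * pi * real k * of_int (int w - int l) / real q)))"
proof -
  have fL: "finite \<Lambda>" using L finite_subset by blast
  have "(if w mod q \<in> \<Lambda> then 1 else 0::real) = (\<Sum>l\<in>\<Lambda>. if w mod q = l then 1 else 0)"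
    using fL by (simp add: sum.delta)
  also have "\<dots> = (\<Sum>l\<in>\<Lambda>. (1 / real q) * (\<Sum>k<q. cos (2 * pi * real k * of_int (int w - int l) / real q)))"
    using L by (intro sum.cong refl ind_fourier[OF q0]) auto
  finally show ?thesis .
qed

lemma sum_bound_k:
  fixes q :: nat and x \<eta> :: real
  assumes q0: "q > 0"
  shows "(\<Sum>k<q. (if k = 0 then 1 else 0) + (if even q \<and> k = q div 2 then x else 0) + (if k \<noteq> 0 then \<eta> else 0))
       = 1 + (if even q then x else 0) + real (q - 1) * \<eta>"
proof -
  have s1: "(\<Sum>k<q. (if k = 0 then 1 else 0::real)) = 1" using q0 by (simp add: sum.delta)
  have s2: "(\<Sum>k<q. (if even q \<and> k = q div 2 then x else 0)) = (if even q then x else 0)"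
  proof (cases "even q")
    case True
    have "q div 2 < q" using q0 by simp
    then show ?thesis using True by (simp add: sum.delta)
  qed simp
  have s3: "(\<Sum>k<q. (if k \<noteq> 0 then \<eta> else 0)) = real (q - 1) * \<eta>"
  proof -
    have "(\<Sum>k<q. (if k \<noteq> 0 then \<eta> else 0)) = (\<Sum>k\<in>{k\<in>{..<q}. k \<noteq> 0}. \<eta>)"
      by (rule sum.inter_filter[symmetric]) simp
    also have "{k\<in>{..<q}. k \<noteq> 0} = {..<q} - {0}" by auto
    also have "card ({..<q} - {0}) = q - 1" using q0 by simp
    then have "(\<Sum>k\<in>{..<q} - {0}. \<eta>) = real (q - 1) * \<eta>" by simp
    finally show ?thesis .
  qed
  show ?thesis using s1 s2 s3 by (simp add: sum.distrib)
qed

lemma parity_count: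
  fixes \<Lambda> :: "nat set"
  assumes fL: "finite \<Lambda>"
  shows "(\<Sum>l\<in>\<Lambda>. (-1::real) ^ l) = real (card {x\<in>\<Lambda>. even x}) - real (card {x\<in>\<Lambda>. odd x})"
    and "real (card \<Lambda>) = real (card {x\<in>\<Lambda>. even x}) + real (card {x\<in>\<Lambda>. odd x})"
proof -
  have ce: "real (card {x\<in>\<Lambda>. even x}) = (\<Sum>l\<in>\<Lambda>. if even l then 1 else 0)"
    using sum.inter_filter[OF fL, of "\<lambda>_. 1::real" even] by simp
  have co: "real (card {x\<in>\<Lambda>. odd x}) = (\<Sum>l\<in>\<Lambda>. if odd l then 1 else 0)"
    using sum.inter_filter[OF fL, of "\<lambda>_. 1::real" odd] by simp
  have "(\<Sum>l\<in>\<Lambda>. (-1::real) ^ l) = (\<Sum>l\<in>\<Lambda>. (if even l then 1 else 0) - (if odd l then 1 else 0))"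
    by (intro sum.cong refl) simp
  then show "(\<Sum>l\<in>\<Lambda>. (-1::real) ^ l) = real (card {x\<in>\<Lambda>. even x}) - real (card {x\<in>\<Lambda>. odd x})"
    using ce co by (simp add: sum_subtractf)
  have "real (card \<Lambda>) = (\<Sum>l\<in>\<Lambda>. (1::real))" by simp
  also have "\<dots> = (\<Sum>l\<in>\<Lambda>. (if even l then 1 else 0) + (if odd l then 1 else 0))"
    by (intro sum.cong refl) simp
  finally have "real (card \<Lambda>) = (\<Sum>l\<in>\<Lambda>. (if even l then 1 else 0) + (if odd l then 1 else 0))" .
  then show "real (card \<Lambda>) = real (card {x\<in>\<Lambda>. even x}) + real (card {x\<in>\<Lambda>. odd x})"
    using ce co by (simp add: sum.distrib)
qed



lemma Avg_divc: "Avg m (\<lambda>z. F z / c) = Avg m F / (c::'a::real_normed_field)"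
  unfolding Avg_def by (simp add: sum_divide_distrib[symmetric])

theorem mainTheorem16:
  fixes q n m d t r' :: nat
    and \<Lambda> :: "nat set"
    and \<epsilon> :: real
    and g :: "(nat \<Rightarrow> bool) \<Rightarrow> (nat \<Rightarrow> bool)"
    and idx :: "nat \<Rightarrow> nat"
  assumes "3 \<le> q" and "q \<le> n"
    and "\<Lambda> \<subseteq> {..<q}" and "\<Lambda> \<noteq> {}"
    and "1 \<le> t"
    and "0 \<le> \<epsilon>" and "\<epsilon> \<le> 1"
    and "local_fun d m n g"
    and "1 \<le> r'"
    and "\<forall>a<r'. idx a < n"
    and "\<forall>a<r'. \<forall>b<r'. a \<noteq> b \<longrightarrow>
           (\<Union>j \<in> nbhd m n g (idx a). dep_set m g j) \<inter>
           (\<Union>j \<in> nbhd m n g (idx b). dep_set m g j) = {}"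
    and "\<forall>a<r'. card (nbhd m n g (idx a)) \<le> t"
    and "\<forall>a<r'. tv_marginal_unif m g (nbhd m n g (idx a)) \<le> \<epsilon>"
    and "\<epsilon> \<le> 2 powr (- 14 * real t + 10)"
  shows "unif_prob m (\<lambda>z. hweight n (g z) mod q \<in> \<Lambda>)
         \<le> 2 * real q * exp (- (real r' * 2 powr (- 14 * real t + 11)) / (real q)^2)
           + (if odd q then real (card \<Lambda>) / real q
              else 2 * real (max (card {x \<in> \<Lambda>. even x}) (card {x \<in> \<Lambda>. odd x})) / real q)"
proof -
  note q3 = assms(1) and L = assms(3) and t1 = assms(5) and idxn = assms(10)
    and disjU = assms(11) and cardN = assms(12) and tvN = assms(13) and epsb = assms(14)
  define W where "W z = hweight n (g z)" for z
  define p :: real where "p = 1 / 2 ^ t"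
  define \<delta> where "\<delta> = 2048 * p^14 / (real q)^2"
  define \<eta> where "\<eta> = exp (- (\<delta> * real r'))"
  define NN where "NN a = nbhd m n g (idx a)" for a
  define AA where "AA a = dep_set m g (idx a)" for a
  define UU where "UU a = (\<Union>j \<in> NN a. dep_set m g j)" for a
  have q0: "q > 0" using q3 by simp
  have pw10: "(2::real) powr (- 14 * real t + 10) = 1024 * p^14"
    using pw_conv[of t 10] unfolding p_def by simp
  have pw11: "(2::real) powr (- 14 * real t + 11) = 2048 * p^14"
    using pw_conv[of t 11] unfolding p_def by simp
  have eps: "\<epsilon> \<le> 1024 * (1 / 2 ^ t)^14" using epsb pw10 unfolding p_def by simp
  have p0: "0 < p" unfolding p_def by simp
  have "(2::real) ^ 1 \<le> 2 ^ t" by (rule power_increasing[OF t1]) simp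
  then have ph: "p \<le> 1/2" unfolding p_def by (intro divide_left_mono) auto
  have p14h: "p^14 \<le> (1/2)^14" by (rule power_mono[OF ph]) (use p0 in simp)
  have e16: "\<epsilon> \<le> 1/16"
  proof -
    have h16: "(1/2::real)^14 = 1/16384" by (simp add: power_divide)
    have eps_p: "\<epsilon> \<le> 1024 * p^14" using eps unfolding p_def .
    have "1024 * p^14 \<le> 1024 * (1/2::real)^14" using p14h by simp
    then show ?thesis using eps_p h16 by linarith
  qed
  have iN: "idx a \<in> NN a" for a unfolding NN_def nbhd_def by simp
  have NNsub: "NN a \<subseteq> {..<n}" if "a < r'" for a
    using idxn that unfolding NN_def nbhd_def by auto
  have fNN: "finite (NN a)" if "a < r'" for a using NNsub[OF that] finite_subset by blast
  have AU: "AA a \<subseteq> UU a" for a unfolding AA_def UU_def using iN by blast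
  have Um: "UU a \<subseteq> {..<m}" for a unfolding UU_def using dep_set_sub by blast
  have depsub: "dep_set m g j \<subseteq> UU a" if "j \<in> NN a" for j a unfolding UU_def using that by blast
  have memNN: "j \<in> NN a" if "j < n" "dep_set m g j \<inter> AA a \<noteq> {}" for j a
    using that unfolding NN_def AA_def nbhd_def by auto
  have disj: "UU a \<inter> UU b = {}" if "a < r'" "b < r'" "a \<noteq> b" for a b
    using disjU that unfolding UU_def NN_def by blast
  have half: "\<bar>Avg m (\<lambda>z. if g z (idx a) then 1 else 0::real) - 1/2\<bar> \<le> 1/8" if "a < r'" for a
  proof -
    have "\<bar>Avg m (\<lambda>z. if g z (idx a) then 1 else 0::real) - 1/2\<bar> \<le> 2 * tv_marginal_unif m g (NN a)"
      by (rule half_bound[OF fNN[OF that] iN])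
    moreover have "tv_marginal_unif m g (NN a) \<le> \<epsilon>" using tvN that unfolding NN_def by simp
    ultimately show ?thesis using e16 by simp
  qed
  have inj: "idx a \<noteq> idx b" if "a < r'" "b < r'" "a \<noteq> b" for a b
  proof
    assume eq: "idx a = idx b"
    have "UU a = {}" using disj[OF that] eq unfolding UU_def NN_def by simp
    then have A0: "dep_set m g (idx a) = {}" using AU[of a] unfolding AA_def by simp
    obtain z0 where z0: "z0 \<in> cube m" using cube_nonempty by blast
    have cst: "g z (idx a) = g z0 (idx a)" if "z \<in> cube m" for z
      by (rule loc[OF that z0]) (simp add: A0)
    have "Avg m (\<lambda>z. if g z (idx a) then 1 else 0::real) = Avg m (\<lambda>_. if g z0 (idx a) then 1 else 0)"
      by (rule Avg_cong) (simp add: cst)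
    then have "Avg m (\<lambda>z. if g z (idx a) then 1 else 0::real) = (if g z0 (idx a) then 1 else 0)"
      by (simp add: Avg_const)
    then show False using half[OF that(1)] by (cases "g z0 (idx a)") auto
  qed
  have NNdisj: "NN a \<inter> NN b = {}" if ab: "a < r'" "b < r'" "a \<noteq> b" for a b
  proof (rule ccontr)
    assume "NN a \<inter> NN b \<noteq> {}"
    then obtain j where ja: "j \<in> NN a" and jb: "j \<in> NN b" by blast
    show False
    proof (cases "dep_set m g j = {}")
      case False
      then show ?thesis using depsub[OF ja] depsub[OF jb] disj[OF ab] by blast
    next
      case True
      have "j = idx a" using ja True unfolding NN_def nbhd_def by auto
      moreover have "j = idx b" using jb True unfolding NN_def nbhd_def by auto
      ultimately show ?thesis using inj[OF ab] by simp
    qed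
  qed
  define R where "R = {j\<in>{..<n}. \<forall>a<r'. j \<notin> NN a}"
  have decomp: "W z = card {j\<in>R. g z j} + (\<Sum>a<r'. card {j\<in>NN a. g z j})" for z
  proof -
    have un: "{j\<in>{..<n}. g z j} = {j\<in>R. g z j} \<union> (\<Union>a<r'. {j\<in>NN a. g z j})"
      unfolding R_def using NNsub by blast
    have fR: "finite {j\<in>R. g z j}" unfolding R_def by simp
    have fU: "finite (\<Union>a<r'. {j\<in>NN a. g z j})" using fNN by auto
    have d1: "{j\<in>R. g z j} \<inter> (\<Union>a<r'. {j\<in>NN a. g z j}) = {}" unfolding R_def by blast
    have "card (\<Union>a<r'. {j\<in>NN a. g z j}) = (\<Sum>a<r'. card {j\<in>NN a. g z j})"
    proof (rule card_UN_disjoint)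
      show "\<forall>i\<in>{..<r'}. finite {j \<in> NN i. g z j}" using fNN by simp
      show "\<forall>i\<in>{..<r'}. \<forall>j\<in>{..<r'}. i \<noteq> j \<longrightarrow> {ja \<in> NN i. g z ja} \<inter> {ja \<in> NN j. g z ja} = {}"
        using NNdisj by blast
    qed simp
    then show ?thesis unfolding W_def hweight_def un using card_Un_disjoint[OF fR fU d1] by simp
  qed
  have eta: "cmod (Avg m (\<lambda>z. cis (2 * pi * real k * real (W z) / real q))) \<le> \<eta>"
    if k1: "1 \<le> k" and kq: "k < q" and k2: "2 * k \<noteq> q" for k
  proof -
    define \<phi> where "\<phi> a z = cis (2 * pi * real k * real (card {j\<in>NN a. g z j}) / real q)" for a z
    define G0 where "G0 z = cis (2 * pi * real k * real (card {j\<in>R. g z j}) / real q)" for z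
    define \<omega> where "\<omega> = cis (2 * pi * real k / real q)"
    have eqz: "cis (2 * pi * real k * real (W z) / real q) = G0 z * (\<Prod>a<r'. \<phi> a z)" for z
    proof -
      have "cis (2 * pi * real k * real (W z) / real q) = \<omega> ^ W z" unfolding \<omega>_def by (rule cis_pow_eq[symmetric])
      also have "\<dots> = \<omega> ^ card {j\<in>R. g z j} * (\<Prod>a<r'. \<omega> ^ card {j\<in>NN a. g z j})"
        unfolding decomp by (simp add: power_add power_sum)
      finally show ?thesis unfolding G0_def \<phi>_def \<omega>_def cis_pow_eq .
    qed
    have dphi: "dep_on m (UU a) (\<phi> a)" if "a < r'" for a
    proof (rule dep_onI)
      fix x y assume x: "x \<in> cube m" and y: "y \<in> cube m" and ag: "\<And>j. j \<in> UU a \<Longrightarrow> x j = y j"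
      have "g x j = g y j" if "j \<in> NN a" for j
        by (rule loc[OF x y]) (use ag depsub[OF that] in blast)
      then have "{j\<in>NN a. g x j} = {j\<in>NN a. g y j}" by auto
      then show "\<phi> a x = \<phi> a y" unfolding \<phi>_def by simp
    qed
    have dG: "dep_on m ({..<m} - (\<Union>a<r'. AA a)) G0"
    proof (rule dep_onI)
      fix x y assume x: "x \<in> cube m" and y: "y \<in> cube m" and ag: "\<And>j. j \<in> {..<m} - (\<Union>a<r'. AA a) \<Longrightarrow> x j = y j"
      have "g x j = g y j" if "j \<in> R" for j
      proof (rule loc[OF x y], rule ballI)
        fix u assume u: "u \<in> dep_set m g j"
        have "u \<notin> AA a" if "a < r'" for a
        proof
          assume "u \<in> AA a"
          then have "j \<in> NN a" using memNN[of j a] u \<open>j \<in> R\<close> unfolding R_def by blast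
          then show False using \<open>j \<in> R\<close> that unfolding R_def by blast
        qed
        moreover have "u < m" using u dep_set_sub by blast
        ultimately show "x u = y u" using ag by blast
      qed
      then have "{j\<in>R. g x j} = {j\<in>R. g y j}" by auto
      then show "G0 x = G0 y" unfolding G0_def by simp
    qed
    have nG: "cmod (G0 z) \<le> 1" for z unfolding G0_def by simp
    have "Avg m (\<lambda>z. cis (2 * pi * real k * real (W z) / real q)) = Avg m (\<lambda>z. G0 z * (\<Prod>a<r'. \<phi> a z))"
      by (simp add: eqz)
    then have "cmod (Avg m (\<lambda>z. cis (2 * pi * real k * real (W z) / real q)))
        \<le> (\<Prod>a<r'. Avg m (\<lambda>z. cmod (Rs (AA a) (\<phi> a) z)))"
      using prod_bound[where A=AA and U=UU and \<phi>=\<phi> and G=G0 and r=r' and m=m, OF AU Um disj dphi dG nG] by simp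
    also have "\<dots> \<le> (\<Prod>a<r'. 1 - \<delta>)"
    proof (rule prod_mono)
      fix a assume a: "a \<in> {..<r'}"
      have "Avg m (\<lambda>z. cmod (Rs (AA a) (\<phi> a) z)) \<le> 1 - 2048 * (1 / 2 ^ t)^14 / (real q)^2"
        unfolding \<phi>_def
      proof (rule block_bound[OF q3 k1 kq k2 iN fNN _ _ eps])
        show "card (NN a) \<le> t" using cardN a unfolding NN_def by simp
        show "tv_marginal_unif m g (NN a) \<le> \<epsilon>" using tvN a unfolding NN_def by simp
        show "AA a = dep_set m g (idx a)" unfolding AA_def ..
      qed (use a in simp)
      then show "0 \<le> Avg m (\<lambda>z. cmod (Rs (AA a) (\<phi> a) z)) \<and> Avg m (\<lambda>z. cmod (Rs (AA a) (\<phi> a) z)) \<le> 1 - \<delta>"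
        unfolding \<delta>_def p_def by (auto intro: Avg_mono[of m "\<lambda>_. 0", simplified Avg_const])
    qed
    also have "\<dots> = (1 - \<delta>) ^ r'" by simp
    also have "\<dots> \<le> exp (- \<delta>) ^ r'"
    proof (rule power_mono)
      show "1 - \<delta> \<le> exp (- \<delta>)" using exp_ge_add_one_self[of "- \<delta>"] by simp
      have "\<delta> \<le> 1"
      proof -
        have "(1/2::real)^14 = 1/16384" by (simp add: power_divide)
        then have "2048 * p^14 \<le> 1/8" using p14h by simp
        moreover have "(real q)^2 \<ge> 1" using q0 by simp
        ultimately show ?thesis unfolding \<delta>_def by (simp add: divide_le_eq)
      qed
      then show "0 \<le> 1 - \<delta>" by simp
    qed
    also have "\<dots> = \<eta>" unfolding \<eta>_def by (simp add: exp_of_nat_mult[symmetric] mult.commute)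
    finally show ?thesis .
  qed
  have eta0: "0 \<le> \<eta>" unfolding \<eta>_def by simp
  define T where "T k l = Avg m (\<lambda>z. cos (2 * pi * real k * of_int (int (W z) - int l) / real q))" for k l :: nat
  define \<rho> where "\<rho> = Avg m (\<lambda>z. (-1::real) ^ W z)"
  have \<rho>b: "\<bar>\<rho>\<bar> \<le> 1"
  proof -
    have "\<bar>\<rho>\<bar> \<le> Avg m (\<lambda>z. norm ((-1::real) ^ W z))" unfolding \<rho>_def using norm_Avg[of m "\<lambda>z. (-1::real) ^ W z"] by simp
    also have "\<dots> = 1" by (simp add: Avg_const)
    finally show ?thesis .
  qed
  have fL: "finite \<Lambda>" using L finite_subset by blast
  have P: "unif_prob m (\<lambda>z. hweight n (g z) mod q \<in> \<Lambda>) = (\<Sum>l\<in>\<Lambda>. (1 / real q) * (\<Sum>k<q. T k l))"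
  proof -
    have "unif_prob m (\<lambda>z. hweight n (g z) mod q \<in> \<Lambda>) = Avg m (\<lambda>z. if W z mod q \<in> \<Lambda> then 1 else 0)"
      unfolding unif_Avg W_def ..
    also have "\<dots> = Avg m (\<lambda>z. \<Sum>l\<in>\<Lambda>. (1 / real q) * (\<Sum>k<q. cos (2 * pi * real k * of_int (int (W z) - int l) / real q)))"
      by (simp add: sum_ind_fourier[OF q0 L])
    also have "\<dots> = (\<Sum>l\<in>\<Lambda>. (1 / real q) * (\<Sum>k<q. T k l))"
      unfolding T_def by (simp add: Avg_sum Avg_cmult Avg_divc)
    finally show ?thesis .
  qed
  have Tb: "T k l \<le> (if k = 0 then 1 else 0) + (if even q \<and> k = q div 2 then (-1) ^ l * \<rho> else 0) + (if k \<noteq> 0 then \<eta> else 0)"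
    if kq: "k < q" for k l
  proof (cases "k = 0")
    case True
    have "q div 2 \<noteq> 0" using q3 by simp
    then show ?thesis unfolding T_def using True by (simp add: Avg_const)
  next
    case False
    show ?thesis
    proof (cases "even q \<and> k = q div 2")
      case True
      then obtain h where qh: "q = 2 * h" and kh: "k = h" by auto
      have h0: "h > 0" using qh q0 by simp
      have "T k l = (-1) ^ l * \<rho>" unfolding T_def \<rho>_def qh kh by (rule parity_term[OF h0])
      then show ?thesis using True False eta0 by simp
    next
      case nk: False
      have k2: "2 * k \<noteq> q" using nk by auto
      have "T k l \<le> \<eta>" unfolding T_def
        using cos_term_bound[where m=m and k=k and W=W and q=q and l=l] eta[of k] False kq k2 by simp
      then show ?thesis using nk False by auto
    qed
  qed
  have Sk: "(\<Sum>k<q. T k l) \<le> 1 + (if even q then (-1) ^ l * \<rho> else 0) + real (q - 1) * \<eta>" for l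
  proof -
    have "(\<Sum>k<q. T k l) \<le> (\<Sum>k<q. (if k = 0 then 1 else 0) + (if even q \<and> k = q div 2 then (-1) ^ l * \<rho> else 0) + (if k \<noteq> 0 then \<eta> else 0))"
      by (rule sum_mono, rule Tb) simp
    also have "\<dots> = 1 + (if even q then (-1) ^ l * \<rho> else 0) + real (q - 1) * \<eta>"
      by (rule sum_bound_k[OF q0])
    finally show ?thesis .
  qed
  have cL: "real (card \<Lambda>) \<le> real q"
  proof -
    have "card \<Lambda> \<le> card {..<q}" by (rule card_mono) (use L in auto)
    then show ?thesis by simp
  qed
  have main: "unif_prob m (\<lambda>z. hweight n (g z) mod q \<in> \<Lambda>)
      \<le> real (card \<Lambda>) / real q + (if even q then \<rho> * (\<Sum>l\<in>\<Lambda>. (-1::real) ^ l) / real q else 0) + real q * \<eta>"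
  proof -
    have "unif_prob m (\<lambda>z. hweight n (g z) mod q \<in> \<Lambda>)
        \<le> (\<Sum>l\<in>\<Lambda>. (1 / real q) * (1 + (if even q then (-1) ^ l * \<rho> else 0) + real (q - 1) * \<eta>))"
      unfolding P using q0 by (intro sum_mono mult_left_mono Sk) auto
    also have "\<dots> = real (card \<Lambda>) / real q + (if even q then \<rho> * (\<Sum>l\<in>\<Lambda>. (-1::real) ^ l) / real q else 0)
                     + real (card \<Lambda>) * real (q - 1) * \<eta> / real q"
      by (simp add: sum.distrib sum_distrib_left sum_divide_distrib[symmetric] algebra_simps)
    also have "real (card \<Lambda>) * real (q - 1) * \<eta> / real q \<le> real q * \<eta>"
    proof -
      have "real (card \<Lambda>) * real (q - 1) \<le> real q * real q"
        using cL q0 by (intro mult_mono) auto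
      then have "real (card \<Lambda>) * real (q - 1) * \<eta> \<le> real q * real q * \<eta>"
        using eta0 by (rule mult_right_mono)
      then show ?thesis using q0 by (simp add: divide_le_eq mult.commute mult.left_commute)
    qed
    finally show ?thesis by simp
  qed
  have expeq: "exp (- (real r' * 2 powr (- 14 * real t + 11)) / (real q)^2) = \<eta>"
    unfolding \<eta>_def \<delta>_def pw11 by (simp add: field_simps)
  show ?thesis
  proof (cases "odd q")
    case True
    have "0 \<le> real q * \<eta>" using eta0 by simp
    then show ?thesis using main expeq True by simp
  next
    case False
    define a where "a = real (card {x\<in>\<Lambda>. even x})"
    define b where "b = real (card {x\<in>\<Lambda>. odd x})"
    have S: "(\<Sum>l\<in>\<Lambda>. (-1::real) ^ l) = a - b" and C: "real (card \<Lambda>) = a + b"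
      unfolding a_def b_def using parity_count[OF fL] by auto
    have "\<rho> * (a - b) \<le> \<bar>a - b\<bar>"
    proof -
      have "\<rho> * (a - b) \<le> \<bar>\<rho>\<bar> * \<bar>a - b\<bar>" by (metis abs_ge_self abs_mult)
      also have "\<dots> \<le> 1 * \<bar>a - b\<bar>" by (rule mult_right_mono[OF \<rho>b]) simp
      finally show ?thesis by simp
    qed
    then have "(a + b) + \<rho> * (a - b) \<le> 2 * max a b" by (simp add: max_def abs_if) (smt (verit))
    moreover have "real (max (card {x \<in> \<Lambda>. even x}) (card {x \<in> \<Lambda>. odd x})) = max a b"
      unfolding a_def b_def by (simp add: of_nat_max)
    ultimately have "real (card \<Lambda>) / real q + \<rho> * (\<Sum>l\<in>\<Lambda>. (-1::real) ^ l) / real q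
        \<le> 2 * real (max (card {x \<in> \<Lambda>. even x}) (card {x \<in> \<Lambda>. odd x})) / real q"
      using q0 S C by (simp add: add_divide_distrib[symmetric] divide_right_mono)
    moreover have "0 \<le> real q * \<eta>" using eta0 by simp
    ultimately show ?thesis using main expeq False by simp
  qed
qed


end
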